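(* Let $X$ be an infinite-dimensional real Hilbert space, and let $u$, $(d_n)$, $(t_n)$, $(\rho_n)$, $\rho_\infty$, $(x_n)$ be as in the context. Set $C := \overline{\mathrm{conv}}\{x_n : n\ge 2\}$. Then there exists a firmly nonexpansive operator $T\colon X\to X$ such that $\overline{\mathrm{ran}}\, T = C$, $\mathrm{Fix}\, T = \{0\}$, $T x_n = x_{n+1}$ for every $n\ge 1$, and $T^n x_1 \rightharpoonup 0$ (weakly) as $n\to\infty$, while $\inf_{n\ge 1}\|T^n x_1\| = \rho_\infty > 0$.
   Context: Standing setup. $X$ is an infinite-dimensional real Hilbert space with inner product $\langle\cdot,\cdot\rangle$. $u\colon [0,\infty)\to X$ is a curve satisfying $\langle u(s),u(t)\rangle = \exp(-(s-t)^2)$ for all $s,t\ge 0$ (in particular each $u(t)$ is a unit vector). $(d_n)_{n\ge1}$ is a sequence of reals with $d_n>0$ for all $n$, $\sum_{k=1}^\infty d_k^2<\infty$, $t_n := \sum_{k=1}^{n-1} d_k \to +\infty$ (so $t_1=0$ and $t_{n+1}-t_n=d_n$), $d_1\le 1/8$, and $d_{n+1}\le d_n/(1+64 d_n^2)$ for all $n\ge1$. Define $\rho_1:=1$, $\rho_{n+1}:=\rho_n\exp(-d_n^2)$, $\rho_\infty := \exp(-\sum_{k=1}^\infty d_k^2)$, and $x_n := \rho_n u(t_n)$ for $n\ge 1$. An operator $T\colon X\to X$ is firmly nonexpansive if $\|Tx-Ty\|^2\le\langle x-y,Tx-Ty\rangle$ for all $x,y\in X$; $\mathrm{Fix}\,T$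 denotes its fixed point set, $\overline{\mathrm{ran}}\,T$ the closure of its range, and $\overline{\mathrm{conv}}$ the closed convex hull. *)

theory Defs
  imports "HOL-Analysis.Analysis"
begin

definition firmly_nonexpansive :: "('a::real_inner \<Rightarrow> 'a) \<Rightarrow> bool" where
  "firmly_nonexpansive T \<longleftrightarrow>
     (\<forall>x y. (norm (T x - T y))\<^sup>2 \<le> inner (x - y) (T x - T y))"

definition weakly_tendsto :: "(nat \<Rightarrow> 'a::real_inner) \<Rightarrow> 'a \<Rightarrow> bool" where
  "weakly_tendsto f l \<longleftrightarrow> (\<forall>y. (\<lambda>n. inner (f n) y) \<longlonglongrightarrow> inner l y)"

definition infinite_dimensional :: "'a::real_vector itself \<Rightarrow> bool" where
  "infinite_dimensional _ \<longleftrightarrow> (\<forall>B::'a set. finite B \<longrightarrow> span B \<noteq> UNIV)"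

end

theory Submission
  imports Defs "HOL-Analysis.Analysis"
begin

lemma parallelogram_law:
  fixes a b :: "'a::real_inner"
  shows "norm (a + b)^2 + norm (a - b)^2 = 2 * norm a ^2 + 2 * norm b ^2"
  by (simp add: power2_norm_eq_inner algebra_simps inner_commute)

lemma norm_diff_sq:
  fixes a b :: "'a::real_inner"
  shows "norm (a - b)^2 = norm a ^2 - 2 * inner a b + norm b ^2"
  by (simp add: power2_norm_eq_inner algebra_simps inner_commute)

lemma norm_add_sq:
  fixes a b :: "'a::real_inner"
  shows "norm (a + b)^2 = norm a ^2 + 2 * inner a b + norm b ^2"
  by (simp add: power2_norm_eq_inner algebra_simps inner_commute)

lemma nearest_varineq:
  fixes S :: "'a::real_inner set"
  assumes cS: "convex S" and pS: "p \<in> S" and yS: "y \<in> S"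
    and mn: "\<And>v. v \<in> S \<Longrightarrow> norm (x - p) \<le> norm (x - v)"
  shows "inner (x - p) (y - p) \<le> 0"
proof (rule ccontr)
  assume "\<not> ?thesis"
  then have g: "inner (x - p) (y - p) > 0" by simp
  define e where "e = y - p"
  have e0: "e \<noteq> 0" using g e_def by auto
  hence ne: "norm e ^2 > 0" by simp
  define s where "s = min 1 (inner (x - p) e / norm e ^2)"
  have s0: "s > 0" using g ne by (simp add: s_def e_def)
  have s1: "s \<le> 1" by (simp add: s_def)
  have sle: "s * norm e ^2 \<le> inner (x - p) e"
    using ne by (simp add: s_def min_def field_simps)
  have "p + s *\<^sub>R e \<in> S"
  proof -
    have "(1 - s) *\<^sub>R p + s *\<^sub>R y \<in> S"
      using cS pS yS s0 s1 by (simp add: convex_def)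
    moreover have "(1 - s) *\<^sub>R p + s *\<^sub>R y = p + s *\<^sub>R e"
      by (simp add: e_def algebra_simps)
    ultimately show ?thesis by simp
  qed
  hence "norm (x - p) \<le> norm (x - (p + s *\<^sub>R e))" by (rule mn)
  hence "norm (x - p)^2 \<le> norm ((x - p) - s *\<^sub>R e)^2"
    by (simp add: algebra_simps power_mono)
  also have "\<dots> = norm (x - p)^2 - 2 * s * inner (x - p) e + s^2 * norm e ^2"
    by (simp add: norm_diff_sq power_mult_distrib)
  finally have "2 * s * inner (x - p) e \<le> s * (s * norm e ^2)"
    by (simp add: power2_eq_square algebra_simps)
  hence "2 * inner (x - p) e \<le> s * norm e ^2" using s0 by simp
  with sle have "inner (x - p) e \<le> 0" by linarith
  with g e_def show False by simp
qed

lemma nearest_exists: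
  fixes S :: "'a::{real_inner,complete_space} set"
  assumes cl: "closed S" and cS: "convex S" and ne: "S \<noteq> {}"
  shows "\<exists>p\<in>S. \<forall>v\<in>S. norm (x - p) \<le> norm (x - v)"
proof -
  define \<delta> where "\<delta> = infdist x S"
  have d0: "\<delta> \<ge> 0" by (simp add: \<delta>_def infdist_nonneg)
  have dle: "\<delta> \<le> norm (x - v)" if "v \<in> S" for v
    using infdist_le[OF that, of x] by (simp add: \<delta>_def dist_norm)
  have "\<forall>k::nat. \<exists>y\<in>S. norm (x - y) < \<delta> + 1 / (Suc k)"
  proof
    fix k :: nat
    have "infdist x S < \<delta> + 1 / Suc k" by (simp add: \<delta>_def)
    moreover have "bdd_below ((\<lambda>a. dist x a) ` S)"
      by (rule bdd_belowI[of _ 0]) auto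
    ultimately obtain y where "y \<in> S" "dist x y < \<delta> + 1 / Suc k"
      using cINF_less_iff ne by (metis infdist_notempty)
    thus "\<exists>y\<in>S. norm (x - y) < \<delta> + 1 / (Suc k)" by (auto simp: dist_norm)
  qed
  then obtain y where yS: "\<And>k. y k \<in> S" and yd: "\<And>k. norm (x - y k) < \<delta> + 1 / (Suc k)"
    by metis
  have ysq: "norm (x - y k)^2 \<le> \<delta>^2 + (2*\<delta>+1) / Suc k" for k
  proof -
    have a: "0 \<le> norm (x - y k)" by simp
    have "norm (x - y k)^2 \<le> (\<delta> + 1 / Suc k)^2"
      using yd[of k] a by (intro power_mono) auto
    also have "\<dots> = \<delta>^2 + (2*\<delta>) / Suc k + (1/Suc k)^2"
      unfolding power2_sum by simp
    finally have h: "norm (x - y k)^2 \<le> \<delta>^2 + (2*\<delta>) / Suc k + (1/Suc k)^2" .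
    have "(1/Suc k)^2 \<le> 1 / Suc k"
      using mult_right_mono[of "1/Suc k" 1 "1/Suc k"] by (simp add: power2_eq_square)
    with h have "norm (x - y k)^2 \<le> \<delta>^2 + ((2*\<delta>) / Suc k + 1 / Suc k)" by linarith
    thus ?thesis by (simp add: add_divide_distrib)
  qed
  have mid: "\<delta>^2 \<le> norm (x - (1/2) *\<^sub>R (y k + y l))^2" for k l
  proof -
    have "(1/2) *\<^sub>R (y k + y l) \<in> S"
      using cS yS[of k] yS[of l] unfolding convex_def
      by (metis (no_types, lifting) field_sum_of_halves le_divide_eq_1_pos scaleR_right_distrib
           zero_le_divide_1_iff zero_le_numeral zero_less_numeral)
    from dle[OF this] d0 show ?thesis by (intro power_mono) auto
  qed
  have dist_yy: "norm (y k - y l)^2 \<le> 2*(2*\<delta>+1) * (1/Suc k + 1/Suc l)" for k l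
  proof -
    have par: "norm ((x - y k) + (x - y l))^2 + norm ((x - y k) - (x - y l))^2
        = 2 * norm (x - y k)^2 + 2 * norm (x - y l)^2" by (rule parallelogram_law)
    have e1: "(x - y k) + (x - y l) = 2 *\<^sub>R (x - (1/2) *\<^sub>R (y k + y l))"
      by (simp add: algebra_simps scaleR_2)
    have e2: "(x - y k) - (x - y l) = y l - y k" by simp
    have "norm ((x - y k) + (x - y l))^2 = 4 * norm (x - (1/2) *\<^sub>R (y k + y l))^2"
      unfolding e1 by (simp add: power2_eq_square)
    with par e2 have "norm (y l - y k)^2 = 2 * norm (x - y k)^2 + 2 * norm (x - y l)^2
        - 4 * norm (x - (1/2) *\<^sub>R (y k + y l))^2" by simp
    also have "\<dots> \<le> 2 * (\<delta>^2 + (2*\<delta>+1) / Suc k) + 2 * (\<delta>^2 + (2*\<delta>+1) / Suc l) - 4 * \<delta>^2"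
      using ysq[of k] ysq[of l] mid[of k l] by (smt (verit))
    also have "\<dots> = 2*(2*\<delta>+1) * (1/Suc k + 1/Suc l)" by (simp add: algebra_simps add_divide_distrib)
    finally show ?thesis by (simp add: norm_minus_commute)
  qed
  have "Cauchy y"
  proof (rule metric_CauchyI)
    fix e :: real assume e: "e > 0"
    define c where "c = 2*(2*\<delta>+1)"
    have c0: "c > 0" using d0 by (simp add: c_def)
    obtain M :: nat where M: "real M > 2 * c / e^2" using reals_Archimedean2 by blast
    show "\<exists>M. \<forall>m\<ge>M. \<forall>n\<ge>M. dist (y m) (y n) < e"
    proof (intro exI allI impI)
      fix m n assume mM: "m \<ge> M" and nM: "n \<ge> M"
      have "1 / real (Suc m) \<le> 1 / real (Suc M)" using mM by (simp add: frac_le)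
      moreover have "1 / real (Suc n) \<le> 1 / real (Suc M)" using nM by (simp add: frac_le)
      ultimately have "1 / real (Suc m) + 1 / real (Suc n) \<le> 2 / Suc M" by simp
      hence "c * (1 / real (Suc m) + 1 / real (Suc n)) \<le> c * (2 / Suc M)"
        using c0 by (intro mult_left_mono) auto
      hence "norm (y m - y n)^2 \<le> c * (2 / Suc M)"
        using dist_yy[of m n] unfolding c_def[symmetric] by linarith
      also have "c * (2 / Suc M) < e^2"
      proof -
        have "2 * c / e^2 < Suc M" using M by simp
        hence "2 * c < Suc M * e^2" using e by (simp add: field_simps)
        thus ?thesis by (simp add: field_simps)
      qed
      finally have "norm (y m - y n)^2 < e^2" .
      hence "norm (y m - y n) < e" using e by (simp add: power_less_imp_less_base)
      thus "dist (y m) (y n) < e" by (simp add: dist_norm)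
    qed
  qed
  then obtain p where lim: "y \<longlonglongrightarrow> p" using convergent_def Cauchy_convergent_iff by blast
  have pS: "p \<in> S" using closed_sequentially[OF cl] yS lim by blast
  have "(\<lambda>k. norm (x - y k)) \<longlonglongrightarrow> norm (x - p)"
    by (intro tendsto_intros lim)
  moreover have "(\<lambda>k. \<delta> + 1 / Suc k) \<longlonglongrightarrow> \<delta>"
    using tendsto_add[OF tendsto_const LIMSEQ_inverse_real_of_nat] by (simp add: inverse_eq_divide)
  ultimately have "norm (x - p) \<le> \<delta>"
    using yd by (intro LIMSEQ_le) (auto intro: less_imp_le)
  with dle pS show ?thesis by (meson order_trans)
qed


lemma continuous_on_Max_fin:
  assumes "finite I" "I \<noteq> {}" "\<And>i. i \<in> I \<Longrightarrow> continuous_on S (f i)"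
  shows "continuous_on S (\<lambda>x. Max ((\<lambda>i. (f i x :: real)) ` I))"
  using assms
proof (induction I rule: finite_ne_induct)
  case (singleton i)
  thus ?case by simp
next
  case (insert i I)
  have "continuous_on S (\<lambda>x. max (f i x) (Max ((\<lambda>i. f i x) ` I)))"
    using insert by (intro continuous_on_max) auto
  moreover have "Max ((\<lambda>i. f i x) ` insert i I) = max (f i x) (Max ((\<lambda>i. f i x) ` I))" for x
    using insert by (simp add: Max_insert)
  ultimately show ?case by simp
qed

lemma pair_sum_identity:
  fixes p :: "'i \<Rightarrow> 'a::real_inner"
  assumes fin: "finite I" and s1: "sum u I = 1"
  shows "(\<Sum>i\<in>I. \<Sum>j\<in>I. u i * u j * norm (p i - p j)^2)
       = 2 * (\<Sum>i\<in>I. u i * norm (q - p i)^2) - 2 * norm (q - (\<Sum>i\<in>I. u i *\<^sub>R p i))^2"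
proof -
  define e where "e i = q - p i" for i
  have 1: "norm (p i - p j)^2 = norm (e i)^2 + norm (e j)^2 - 2 * inner (e i) (e j)" for i j
  proof -
    have "p i - p j = e j - e i" by (simp add: e_def)
    hence "norm (p i - p j)^2 = norm (e j)^2 - 2 * inner (e j) (e i) + norm (e i)^2"
      by (simp add: norm_diff_sq)
    thus ?thesis by (simp add: inner_commute)
  qed
  have s2: "(\<Sum>i\<in>I. \<Sum>j\<in>I. u i * u j * norm (p i - p j)^2)
      = (\<Sum>i\<in>I. \<Sum>j\<in>I. u i * u j * norm (e i)^2 + u i * u j * norm (e j)^2
            - 2 * (u i * u j * inner (e i) (e j)))"
    unfolding 1 by (simp add: algebra_simps)
  have s3: "\<dots> = (\<Sum>i\<in>I. u i * norm (e i)^2) * sum u I + sum u I * (\<Sum>j\<in>I. u j * norm (e j)^2)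
        - 2 * (\<Sum>i\<in>I. \<Sum>j\<in>I. u i * u j * inner (e i) (e j))"
  proof -
    have a1: "(\<Sum>i\<in>I. \<Sum>j\<in>I. u i * u j * norm (e i)^2) = (\<Sum>i\<in>I. u i * norm (e i)^2) * sum u I"
      unfolding sum_product by (intro sum.cong refl) (simp add: mult_ac)
    have a2: "(\<Sum>i\<in>I. \<Sum>j\<in>I. u i * u j * norm (e j)^2) = sum u I * (\<Sum>j\<in>I. u j * norm (e j)^2)"
      unfolding sum_product by (intro sum.cong refl) (simp add: mult_ac)
    have a3: "(\<Sum>i\<in>I. \<Sum>j\<in>I. u i * u j * norm (e i)^2 + u i * u j * norm (e j)^2
            - 2 * (u i * u j * inner (e i) (e j))) = (\<Sum>i\<in>I. \<Sum>j\<in>I. u i * u j * norm (e i)^2)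
         + (\<Sum>i\<in>I. \<Sum>j\<in>I. u i * u j * norm (e j)^2) - 2 * (\<Sum>i\<in>I. \<Sum>j\<in>I. u i * u j * inner (e i) (e j))"
      by (simp only: sum_subtractf sum.distrib sum_distrib_left)
    show ?thesis unfolding a3 a1 a2 ..
  qed
  have s4: "(\<Sum>i\<in>I. \<Sum>j\<in>I. u i * u j * inner (e i) (e j)) = inner (\<Sum>i\<in>I. u i *\<^sub>R e i) (\<Sum>j\<in>I. u j *\<^sub>R e j)"
    apply (simp add: inner_sum_left inner_sum_right sum_distrib_left algebra_simps)
    apply (subst sum.swap)
    apply (simp add: inner_commute mult_ac)
    done
  have s5: "(\<Sum>i\<in>I. u i *\<^sub>R e i) = q - (\<Sum>i\<in>I. u i *\<^sub>R p i)"
    by (simp add: e_def scaleR_right_diff_distrib sum_subtractf s1 flip: scaleR_left.sum)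
  have s6: "inner (q - (\<Sum>i\<in>I. u i *\<^sub>R p i)) (q - (\<Sum>i\<in>I. u i *\<^sub>R p i)) = norm (q - (\<Sum>i\<in>I. u i *\<^sub>R p i))^2"
    by (simp add: power2_norm_eq_inner)
  show ?thesis unfolding s2 s3 s4 s5 s6 s1 by (simp add: e_def)
qed


lemma minnorm_exists:
  fixes S :: "'a::{real_inner,complete_space} set"
  assumes "closed S" "convex S" "S \<noteq> {}"
  shows "\<exists>p\<in>S. \<forall>v\<in>S. norm p \<le> norm v"
proof -
  obtain p where "p \<in> S" "\<forall>v\<in>S. norm (0 - p) \<le> norm (0 - v)"
    using nearest_exists[OF assms, of 0] by blast
  thus ?thesis by (intro bexI[of _ p]) auto
qed

lemma minnorm_pyth:
  fixes S :: "'a::real_inner set"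
  assumes "convex S" "p \<in> S" "v \<in> S" "\<And>v. v \<in> S \<Longrightarrow> norm p \<le> norm v"
  shows "norm (v - p)^2 \<le> norm v ^2 - norm p ^2"
proof -
  have "inner (0 - p) (v - p) \<le> 0"
    using nearest_varineq[OF assms(1,2,3), of 0] assms(4) by simp
  hence i: "inner p (v - p) \<ge> 0" by simp
  have "norm (p + (v - p)) ^2 = norm p ^2 + 2 * inner p (v - p) + norm (v - p)^2"
    by (rule norm_add_sq)
  hence "norm v ^2 = norm p ^2 + 2 * inner p (v - p) + norm (v - p)^2" by simp
  with i show ?thesis by linarith
qed

lemma fip_closed_convex:
  fixes F :: "'a::{real_inner,complete_space} set set"
  assumes cc: "\<And>S. S \<in> F \<Longrightarrow> closed S \<and> convex S"
    and S0: "S0 \<in> F" and bnd: "\<And>y. y \<in> S0 \<Longrightarrow> norm y \<le> B"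
    and fin: "\<And>G. finite G \<Longrightarrow> G \<subseteq> F \<Longrightarrow> \<Inter>G \<noteq> {}"
  shows "\<Inter>F \<noteq> {}"
proof -
  define \<G> where "\<G> = {G. finite G \<and> G \<subseteq> F}"
  define mp :: "'a set set \<Rightarrow> 'a" where "mp G = (SOME p. p \<in> \<Inter>G \<and> (\<forall>v\<in>\<Inter>G. norm p \<le> norm v))" for G
  have mpG: "mp G \<in> \<Inter>G \<and> (\<forall>v\<in>\<Inter>G. norm (mp G) \<le> norm v)" if "G \<in> \<G>" for G
  proof -
    have c1: "closed (\<Inter>G)" using cc that by (auto simp: \<G>_def intro!: closed_Inter)
    have c2: "convex (\<Inter>G)" using cc that by (auto simp: \<G>_def intro!: convex_Inter)
    have c3: "\<Inter>G \<noteq> {}" using fin that by (auto simp: \<G>_def)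
    have "\<exists>p\<in>\<Inter>G. \<forall>v\<in>\<Inter>G. norm p \<le> norm v" by (rule minnorm_exists[OF c1 c2 c3])
    hence "\<exists>p. p \<in> \<Inter>G \<and> (\<forall>v\<in>\<Inter>G. norm p \<le> norm v)" unfolding Bex_def .
    thus ?thesis unfolding mp_def by (rule someI_ex)
  qed
  have cvx: "convex (\<Inter>G)" if "G \<in> \<G>" for G
    using cc that by (auto simp: \<G>_def intro!: convex_Inter)
  have mono: "norm (mp G) \<le> norm (mp G')" if "G \<in> \<G>" "G' \<in> \<G>" "G \<subseteq> G'" for G G'
  proof -
    have "mp G' \<in> \<Inter>G" using mpG[OF that(2)] that(3) by auto
    thus ?thesis using mpG[OF that(1)] by (simp only: Ball_def)
  qed
  have ins: "insert S0 G \<in> \<G>" if "G \<in> \<G>" for G using that S0 by (auto simp: \<G>_def)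
  have bd: "norm (mp G) \<le> B" if "G \<in> \<G>" for G
  proof -
    have "norm (mp G) \<le> norm (mp (insert S0 G))" using mono[OF that ins[OF that]] by auto
    also have "\<dots> \<le> B" using mpG[OF ins[OF that]] bnd by auto
    finally show ?thesis .
  qed
  define m where "m = Sup ((\<lambda>G. norm (mp G)) ` \<G>)"
  have Gne: "\<G> \<noteq> {}" using S0 by (auto simp: \<G>_def)
  have bdd: "bdd_above ((\<lambda>G. norm (mp G)) ` \<G>)" by (rule bdd_aboveI[of _ B]) (use bd in auto)
  have le_m: "norm (mp G) \<le> m" if "G \<in> \<G>" for G
    unfolding m_def using bdd that by (intro cSUP_upper) auto
  have e\<G>: "{} \<in> \<G>" by (simp add: \<G>_def)
  have m0: "m \<ge> 0" using le_m[OF e\<G>] norm_ge_zero[of "mp {}"] by linarith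
  have "\<forall>k::nat. \<exists>G\<in>\<G>. m - 1 / Suc k < norm (mp G)"
  proof
    fix k :: nat
    have "m - 1 / Suc k < m" by simp
    thus "\<exists>G\<in>\<G>. m - 1 / Suc k < norm (mp G)"
      using less_cSUP_iff[OF Gne bdd] unfolding m_def by blast
  qed
  then obtain Gs where Gs: "\<And>k. Gs k \<in> \<G>" and Gsm: "\<And>k. m - 1 / Suc k < norm (mp (Gs k))"
    by metis
  define H where "H k = insert S0 (\<Union>j\<le>k. Gs j)" for k
  have H\<G>: "H k \<in> \<G>" for k using Gs S0 by (auto simp: H_def \<G>_def)
  have Hmono: "H k \<subseteq> H l" if "k \<le> l" for k l using that by (auto simp: H_def)
  have Hm: "m - 1 / Suc k < norm (mp (H k))" for k
  proof -
    have "Gs k \<subseteq> H k" by (auto simp: H_def)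
    hence "norm (mp (Gs k)) \<le> norm (mp (H k))" by (rule mono[OF Gs H\<G>])
    thus ?thesis using Gsm[of k] by linarith
  qed
  have key: "norm (mp G' - mp (H k))^2 \<le> 2 * m / Suc k" if "G' \<in> \<G>" "H k \<subseteq> G'" for G' k
  proof -
    have a: "mp G' \<in> \<Inter>(H k)" using mpG[OF that(1)] that(2) by auto
    have "norm (mp G' - mp (H k))^2 \<le> norm (mp G')^2 - norm (mp (H k))^2"
      using minnorm_pyth[OF cvx[OF H\<G>[of k]] _ a] mpG[OF H\<G>[of k]] by simp
    also have "\<dots> \<le> m^2 - norm (mp (H k))^2"
      using le_m[OF that(1)] by (simp add: power_mono)
    also have "\<dots> = (m - norm (mp (H k))) * (m + norm (mp (H k)))"
      by (simp add: power2_eq_square algebra_simps)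
    also have "\<dots> \<le> (1 / Suc k) * (2 * m)"
    proof (rule mult_mono)
      show "m - norm (mp (H k)) \<le> 1 / real (Suc k)" using Hm[of k] by simp
      show "m + norm (mp (H k)) \<le> 2 * m" using le_m[OF H\<G>[of k]] by simp
      show "0 \<le> 1 / real (Suc k)" by simp
      show "0 \<le> m + norm (mp (H k))" using m0 by simp
    qed
    finally show ?thesis by simp
  qed
  have lim0: "(\<lambda>k. sqrt (2 * m / Suc k)) \<longlonglongrightarrow> 0"
  proof -
    have "(\<lambda>k. 2 * m * inverse (real (Suc k))) \<longlonglongrightarrow> 2 * m * 0"
      by (intro tendsto_mult tendsto_const LIMSEQ_inverse_real_of_nat)
    hence "(\<lambda>k. 2 * m / Suc k) \<longlonglongrightarrow> 0" by (simp add: divide_inverse)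
    thus ?thesis using tendsto_real_sqrt by fastforce
  qed
  have keyn: "norm (mp G' - mp (H k)) \<le> sqrt (2 * m / Suc k)" if "G' \<in> \<G>" "H k \<subseteq> G'" for G' k
    using key[OF that] by (simp add: real_le_rsqrt)
  define w where "w k = mp (H k)" for k
  have "Cauchy w"
  proof (rule metric_CauchyI)
    fix e :: real assume e: "e > 0"
    obtain K where K: "\<forall>k\<ge>K. norm (sqrt (2 * m / Suc k) - 0) < e"
      using lim0[unfolded LIMSEQ_def] e by (auto simp: dist_norm)
    show "\<exists>M. \<forall>a\<ge>M. \<forall>b\<ge>M. dist (w a) (w b) < e"
    proof (intro exI allI impI)
      fix a b assume a: "a \<ge> K" and b: "b \<ge> K"
      show "dist (w a) (w b) < e"
      proof (cases "a \<le> b")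
        case True
        have "norm (w b - w a) \<le> sqrt (2 * m / Suc a)"
          unfolding w_def by (rule keyn[OF H\<G> Hmono[OF True]])
        also have "\<dots> < e" using K a by auto
        finally show ?thesis by (simp add: dist_norm norm_minus_commute)
      next
        case False
        hence ba: "b \<le> a" by simp
        have "norm (w a - w b) \<le> sqrt (2 * m / Suc b)"
          unfolding w_def by (rule keyn[OF H\<G> Hmono[OF ba]])
        also have "\<dots> < e" using K b by auto
        finally show ?thesis by (simp add: dist_norm)
      qed
    qed
  qed
  then obtain w0 where wlim: "w \<longlonglongrightarrow> w0" using Cauchy_convergent_iff convergent_def by blast
  have "w0 \<in> S" if SF: "S \<in> F" for S
  proof -
    define v where "v k = mp (insert S (H k))" for k
    have vG: "insert S (H k) \<in> \<G>" for k using H\<G>[of k] SF by (auto simp: \<G>_def)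
    have "(\<lambda>k. v k - w k) \<longlonglongrightarrow> 0"
    proof (rule Lim_null_comparison[OF _ lim0])
      show "\<forall>\<^sub>F k in sequentially. norm (v k - w k) \<le> sqrt (2 * m / real (Suc k))"
      proof (rule always_eventually, rule allI)
        fix k
        show "norm (v k - w k) \<le> sqrt (2 * m / real (Suc k))"
          unfolding v_def w_def by (rule keyn[OF vG subset_insertI])
      qed
    qed
    hence "(\<lambda>k. (v k - w k) + w k) \<longlonglongrightarrow> 0 + w0" by (intro tendsto_add wlim)
    hence vlim: "v \<longlonglongrightarrow> w0" by simp
    have "v k \<in> S" for k using mpG[OF vG[of k]] by (auto simp: v_def)
    thus "w0 \<in> S" using closed_sequentially[of S] cc[OF SF] vlim by blast
  qed
  thus ?thesis by blast
qed


lemma kirszbraun_finite: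
  fixes P :: "('a::real_inner \<times> 'a) set"
  assumes finP: "finite P"
    and lip: "\<And>a y a' y'. (a,y) \<in> P \<Longrightarrow> (a',y') \<in> P \<Longrightarrow> norm (y - y') \<le> norm (a - a')"
  shows "\<exists>w. \<forall>(a,y)\<in>P. norm (w - y) \<le> norm (z - a)"
proof (cases "P = {} \<or> (\<exists>y. (z,y) \<in> P)")
  case True
  then show ?thesis
  proof
    assume "P = {}" thus ?thesis by simp
  next
    assume "\<exists>y. (z,y) \<in> P"
    then obtain y0 where y0: "(z,y0) \<in> P" by blast
    show ?thesis
      by (rule exI[of _ y0]) (auto intro: lip[OF y0])
  qed
next
  case False
  hence Pne: "P \<noteq> {}" and rpos: "\<And>q. q \<in> P \<Longrightarrow> norm (z - fst q) > 0"
    by (auto simp: prod_eq_iff)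
  define rat :: "'a \<Rightarrow> 'a \<times> 'a \<Rightarrow> real" where "rat w q = norm (w - snd q) / norm (z - fst q)" for w q
  define \<Phi> where "\<Phi> w = Max ((\<lambda>q. rat w q) ` P)" for w
  define K where "K = convex hull (snd ` P)"
  have Kc: "compact K" unfolding K_def using finP by (intro finite_imp_compact_convex_hull) auto
  have Kne: "K \<noteq> {}" using Pne by (simp add: K_def)
  have Kcv: "convex K" by (simp add: K_def)
  have ratc: "continuous_on S (\<lambda>w. rat w q)" for S q
    unfolding rat_def divide_inverse by (intro continuous_on_mult_right continuous_intros)
  have \<Phi>c: "continuous_on K \<Phi>"
    unfolding \<Phi>_def using finP Pne ratc by (intro continuous_on_Max_fin) auto
  obtain w0 where w0K: "w0 \<in> K" and w0min: "\<And>w. w \<in> K \<Longrightarrow> \<Phi> w0 \<le> \<Phi> w"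
    using continuous_attains_inf[OF Kc Kne \<Phi>c] by blast
  define lam where "lam = \<Phi> w0"
  have rat_le: "rat w q \<le> \<Phi> w" if "q \<in> P" for w q
    unfolding \<Phi>_def using finP that by (intro Max_ge) auto
  have "lam \<le> 1"
  proof (rule ccontr)
    assume "\<not> lam \<le> 1"
    hence l1: "lam > 1" by simp
    define J where "J = {q\<in>P. rat w0 q = lam}"
    have JP: "J \<subseteq> P" by (auto simp: J_def)
    have finJ: "finite J" using finP JP finite_subset by blast
    have "lam \<in> (\<lambda>q. rat w0 q) ` P" unfolding lam_def \<Phi>_def using finP Pne by (intro Max_in) auto
    hence Jne: "J \<noteq> {}" by (auto simp: J_def)
    have notJ: "rat w0 q < lam" if "q \<in> P" "q \<notin> J" for q
      using rat_le[OF that(1), of w0] that by (auto simp: J_def lam_def)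
    define KJ where "KJ = convex hull (snd ` J)"
    have KJc: "compact KJ" unfolding KJ_def using finJ by (intro finite_imp_compact_convex_hull) auto
    have KJne: "KJ \<noteq> {}" using Jne by (simp add: KJ_def)
    have KJK: "KJ \<subseteq> K" unfolding KJ_def K_def using JP by (intro hull_mono) auto
    have dc: "continuous_on KJ (\<lambda>v. norm (w0 - v))" by (intro continuous_intros)
    obtain p where pKJ: "p \<in> KJ" and pmin: "\<And>v. v \<in> KJ \<Longrightarrow> norm (w0 - p) \<le> norm (w0 - v)"
      using continuous_attains_inf[OF KJc KJne dc] by blast
    have vi: "inner (w0 - p) (v - p) \<le> 0" if "v \<in> KJ" for v
      using nearest_varineq[of KJ p v w0] pKJ that pmin by (simp add: KJ_def)
    have w0KJ: "w0 \<in> KJ"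
    proof (rule ccontr)
      assume nw: "w0 \<notin> KJ"
      hence pw: "p \<noteq> w0" using pKJ by auto
      define \<delta> where "\<delta> = norm (p - w0)"
      have \<delta>0: "\<delta> > 0" using pw by (simp add: \<delta>_def)
      define ws where "ws s = w0 + s *\<^sub>R (p - w0)" for s :: real
      have Jdec: "rat (ws s) q < lam" if "q \<in> J" "0 < s" "s \<le> 1" for q s
      proof -
        have qP: "q \<in> P" using that JP by auto
        have yKJ: "snd q \<in> KJ" unfolding KJ_def using that(1) by (intro hull_inc) auto
        have ip: "inner (w0 - snd q) (p - w0) \<le> -(\<delta>^2)"
        proof -
          have "inner (w0 - snd q) (p - w0) = inner (w0 - p) (p - w0) + inner (p - snd q) (p - w0)"
            by (simp add: inner_diff_left)
          also have "inner (w0 - p) (p - w0) = -(\<delta>^2)"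
            by (simp add: \<delta>_def power2_norm_eq_inner inner_commute inner_diff_left inner_diff_right)
          also have "inner (p - snd q) (p - w0) = inner (w0 - p) (snd q - p)"
            by (simp add: inner_diff_left inner_diff_right inner_commute)
          finally show ?thesis using vi[OF yKJ] by linarith
        qed
        have "norm (ws s - snd q)^2 = norm ((w0 - snd q) + s *\<^sub>R (p - w0))^2"
          by (simp add: ws_def algebra_simps)
        also have "\<dots> = norm (w0 - snd q)^2 + 2 * s * inner (w0 - snd q) (p - w0) + s^2 * \<delta>^2"
          by (simp add: norm_add_sq \<delta>_def power_mult_distrib)
        also have "\<dots> \<le> norm (w0 - snd q)^2 - 2 * s * \<delta>^2 + s * \<delta>^2"
        proof -
          have "2 * s * inner (w0 - snd q) (p - w0) \<le> 2 * s * (-(\<delta>^2))"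
            using ip that by (intro mult_left_mono) auto
          moreover have "s^2 * \<delta>^2 \<le> s * \<delta>^2"
            using that by (intro mult_right_mono) (auto simp: power2_eq_square mult_le_cancel_left1)
          ultimately show ?thesis by linarith
        qed
        also have "\<dots> < norm (w0 - snd q)^2" using that \<delta>0 by simp
        finally have "norm (ws s - snd q)^2 < norm (w0 - snd q)^2" .
        hence lt: "norm (ws s - snd q) < norm (w0 - snd q)"
          by (simp add: power_less_imp_less_base)
        have "rat w0 q = lam" using that(1) by (simp add: J_def)
        moreover have "norm (ws s - snd q) / norm (z - fst q) < norm (w0 - snd q) / norm (z - fst q)"
          using lt rpos[OF qP] by (rule divide_strict_right_mono)
        ultimately show ?thesis unfolding rat_def by simp
      qed
      have ev: "\<forall>\<^sub>F s in at_right 0. 0 < s \<and> s \<le> 1 \<and> (\<forall>q\<in>P. rat (ws s) q < lam)"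
      proof -
        have e1: "\<forall>\<^sub>F s in at_right (0::real). 0 < s" by (simp add: eventually_at_right_less)
        have e2: "\<forall>\<^sub>F s in at_right (0::real). s < 1"
          unfolding eventually_at_right_field by (intro exI[of _ 1]) auto
        have e3: "\<forall>\<^sub>F s in at_right 0. rat (ws s) q < lam" if qP: "q \<in> P" for q
        proof (cases "q \<in> J")
          case True
          from e1 e2 show ?thesis by eventually_elim (use Jdec[OF True] in auto)
        next
          case False
          have "((\<lambda>s. rat (ws s) q) \<longlongrightarrow> rat (ws 0) q) (at_right 0)"
          proof -
            have "continuous_on UNIV (\<lambda>s. rat (ws s) q)"
              using rpos[OF qP] unfolding rat_def ws_def by (intro continuous_intros) auto
            thus ?thesis by (metis UNIV_I continuous_on_def tendsto_within_subset top_greatest)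
          qed
          moreover have "rat (ws 0) q < lam" using notJ[OF qP False] by (simp add: ws_def)
          ultimately show ?thesis by (rule order_tendstoD)
        qed
        have "\<forall>\<^sub>F s in at_right 0. \<forall>q\<in>P. rat (ws s) q < lam"
          using finP e3 by (simp add: eventually_ball_finite)
        with e1 e2 show ?thesis by eventually_elim auto
      qed
      obtain s where s0: "0 < s" and s1: "s \<le> 1" and sall: "\<forall>q\<in>P. rat (ws s) q < lam"
        using eventually_happens[OF ev] by auto
      have wsK: "ws s \<in> K"
      proof -
        have "(1 - s) *\<^sub>R w0 + s *\<^sub>R p \<in> K"
          using Kcv w0K KJK pKJ s0 s1 by (intro convexD) auto
        moreover have "(1 - s) *\<^sub>R w0 + s *\<^sub>R p = ws s" by (simp add: ws_def algebra_simps)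
        ultimately show ?thesis by simp
      qed
      have "\<Phi> (ws s) < lam" unfolding \<Phi>_def using finP Pne sall by simp
      with w0min[OF wsK] show False by (simp add: lam_def)
    qed
    define Y where "Y = snd ` J"
    have finY: "finite Y" using finJ by (simp add: Y_def)
    obtain u where u0: "\<And>y. y \<in> Y \<Longrightarrow> 0 \<le> u y" and u1: "sum u Y = 1"
      and uw: "(\<Sum>y\<in>Y. u y *\<^sub>R y) = w0"
      using w0KJ unfolding KJ_def Y_def[symmetric] convex_hull_finite[OF finY] by blast
    define A where "A y = fst (SOME q. q \<in> J \<and> snd q = y)" for y
    have AJ: "(A y, y) \<in> J" if "y \<in> Y" for y
    proof -
      have "\<exists>q. q \<in> J \<and> snd q = y" using that by (auto simp: Y_def)
      hence "(SOME q. q \<in> J \<and> snd q = y) \<in> J \<and> snd (SOME q. q \<in> J \<and> snd q = y) = y"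
        by (rule someI_ex)
      thus ?thesis unfolding A_def by (metis prod.collapse)
    qed
    define r where "r y = norm (z - A y)" for y
    have rp: "r y > 0" if "y \<in> Y" for y using rpos[of "(A y, y)"] AJ[OF that] JP by (auto simp: r_def)
    have nw: "norm (w0 - y) = lam * r y" if "y \<in> Y" for y
    proof -
      have "rat w0 (A y, y) = lam" using AJ[OF that] by (simp add: J_def)
      thus ?thesis using rp[OF that] by (simp add: rat_def r_def field_simps)
    qed
    have id1: "(\<Sum>i\<in>Y. \<Sum>j\<in>Y. u i * u j * norm (i - j)^2)
       = 2 * (\<Sum>i\<in>Y. u i * norm (w0 - i)^2) - 2 * norm (w0 - (\<Sum>i\<in>Y. u i *\<^sub>R i))^2"
      using pair_sum_identity[OF finY u1, of "\<lambda>i. i" w0] by simp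
    have id2: "(\<Sum>i\<in>Y. \<Sum>j\<in>Y. u i * u j * norm (A i - A j)^2)
       = 2 * (\<Sum>i\<in>Y. u i * norm (z - A i)^2) - 2 * norm (z - (\<Sum>i\<in>Y. u i *\<^sub>R A i))^2"
      by (rule pair_sum_identity[OF finY u1])
    have "(\<Sum>i\<in>Y. \<Sum>j\<in>Y. u i * u j * norm (i - j)^2) \<le> (\<Sum>i\<in>Y. \<Sum>j\<in>Y. u i * u j * norm (A i - A j)^2)"
    proof (intro sum_mono)
      fix i j assume i: "i \<in> Y" and j: "j \<in> Y"
      have "norm (i - j) \<le> norm (A i - A j)"
        using lip[of "A i" i "A j" j] AJ[OF i] AJ[OF j] JP by auto
      hence "norm (i - j)^2 \<le> norm (A i - A j)^2" by (simp add: power_mono)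
      thus "u i * u j * norm (i - j)^2 \<le> u i * u j * norm (A i - A j)^2"
        using u0[OF i] u0[OF j] by (intro mult_left_mono) auto
    qed
    hence "2 * (\<Sum>i\<in>Y. u i * norm (w0 - i)^2) \<le> 2 * (\<Sum>i\<in>Y. u i * norm (z - A i)^2)"
      using id1 id2 uw zero_le_power2[of "norm (z - (\<Sum>i\<in>Y. u i *\<^sub>R A i))"] by (simp; linarith)
    hence le: "(\<Sum>i\<in>Y. u i * (lam^2 * (r i)^2)) \<le> (\<Sum>i\<in>Y. u i * (r i)^2)"
      using nw by (simp add: r_def power_mult_distrib)
    have Spos: "(\<Sum>i\<in>Y. u i * (r i)^2) > 0"
    proof -
      obtain y where yY: "y \<in> Y" and uy: "u y \<noteq> 0"
        using u1 by (metis sum.neutral zero_neq_one)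
      show ?thesis
        using yY uy u0 rp finY by (intro sum_pos2[of Y y]) (auto simp: less_le)
    qed
    have "(\<Sum>i\<in>Y. u i * (lam^2 * (r i)^2)) = lam^2 * (\<Sum>i\<in>Y. u i * (r i)^2)"
      by (simp add: sum_distrib_left mult_ac)
    with le have "lam^2 * (\<Sum>i\<in>Y. u i * (r i)^2) \<le> 1 * (\<Sum>i\<in>Y. u i * (r i)^2)" by simp
    hence "lam^2 \<le> 1" using Spos by (rule mult_right_le_imp_le)
    moreover have "1 < lam^2" using l1 by (simp add: one_less_power)
    ultimately show False by simp
  qed
  show ?thesis
  proof (intro exI ballI)
    fix q assume qP: "q \<in> P"
    obtain a y where q: "q = (a,y)" by force
    have "rat w0 q \<le> 1" using rat_le[OF qP, of w0] \<open>lam \<le> 1\<close> by (simp add: lam_def)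
    hence "norm (w0 - y) \<le> norm (z - a)" using rpos[OF qP] by (simp add: rat_def q)
    thus "case q of (a, y) \<Rightarrow> norm (w0 - y) \<le> norm (z - a)" by (simp add: q)
  qed
qed


definition monoset :: "('a::real_inner \<times> 'a) set \<Rightarrow> bool" where
  "monoset M \<longleftrightarrow> (\<forall>p\<in>M. \<forall>q\<in>M. inner (fst p - fst q) (snd p - snd q) \<ge> 0)"

lemma firm_identity:
  fixes w b b' z :: "'a::real_inner"
  shows "inner (w - b) (z - w - b') = (norm (z - (b + b'))^2 - norm (2 *\<^sub>R w - z - (b - b'))^2) / 4"
proof -
  define P where "P = z - (b + b')"
  define Q where "Q = 2 *\<^sub>R w - z - (b - b')"
  have "P + Q = 2 *\<^sub>R (w - b)" by (simp add: P_def Q_def algebra_simps scaleR_2)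
  hence 1: "w - b = (1/2) *\<^sub>R (P + Q)" by simp
  have "P - Q = 2 *\<^sub>R (z - w - b')" by (simp add: P_def Q_def algebra_simps scaleR_2)
  hence 2: "z - w - b' = (1/2) *\<^sub>R (P - Q)" by simp
  have "inner (w - b) (z - w - b') = (1/4) * inner (P + Q) (P - Q)"
    unfolding 1 2 by simp
  also have "inner (P + Q) (P - Q) = norm P ^2 - norm Q ^2"
    by (simp add: power2_norm_eq_inner inner_add_left inner_diff_right inner_diff_left inner_add_right inner_commute)
  finally show ?thesis by (simp add: P_def Q_def)
qed

lemma firm_set_cball:
  fixes w b b' z :: "'a::real_inner"
  shows "{w. inner (w - b) (z - w - b') \<ge> 0} = cball ((1/2) *\<^sub>R (z + (b - b'))) (norm (z - (b + b')) / 2)"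
proof -
  have "inner (w - b) (z - w - b') \<ge> 0 \<longleftrightarrow> norm (2 *\<^sub>R w - z - (b - b')) \<le> norm (z - (b + b'))" for w
    unfolding firm_identity by (simp add: power_mono_iff)
  moreover have "norm (2 *\<^sub>R w - z - (b - b')) = 2 * dist ((1/2) *\<^sub>R (z + (b - b'))) w" for w
  proof -
    have "2 *\<^sub>R w - z - (b - b') = 2 *\<^sub>R (w - (1/2) *\<^sub>R (z + (b - b')))"
      by (simp add: algebra_simps)
    thus ?thesis by (simp add: dist_norm norm_minus_commute)
  qed
  ultimately show ?thesis by (auto simp: field_simps)
qed

lemma one_point_ext:
  fixes M :: "('a::{real_inner,complete_space} \<times> 'a) set"
  assumes mM: "monoset M" and Mne: "M \<noteq> {}"
  shows "\<exists>w. \<forall>q\<in>M. inner (w - fst q) ((z - w) - snd q) \<ge> 0"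
proof -
  define S where "S q = {w. inner (w - fst q) (z - w - snd q) \<ge> 0}" for q :: "'a \<times> 'a"
  have Sc: "S q = cball ((1/2) *\<^sub>R (z + (fst q - snd q))) (norm (z - (fst q + snd q)) / 2)" for q
    unfolding S_def by (rule firm_set_cball)
  define F where "F = S ` M"
  obtain q0 where q0: "q0 \<in> M" using Mne by blast
  have "\<Inter>F \<noteq> {}"
  proof (rule fip_closed_convex)
    show "closed S' \<and> convex S'" if "S' \<in> F" for S'
      using that unfolding F_def Sc by auto
    show "S q0 \<in> F" using q0 by (simp add: F_def)
    show "norm y \<le> norm ((1/2) *\<^sub>R (z + (fst q0 - snd q0))) + norm (z - (fst q0 + snd q0)) / 2"
      if "y \<in> S q0" for y
    proof -
      have "dist ((1/2) *\<^sub>R (z + (fst q0 - snd q0))) y \<le> norm (z - (fst q0 + snd q0)) / 2"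
        using that unfolding Sc by simp
      moreover have "norm y \<le> norm ((1/2) *\<^sub>R (z + (fst q0 - snd q0))) + norm (y - (1/2) *\<^sub>R (z + (fst q0 - snd q0)))"
        using norm_triangle_ineq[of "(1/2) *\<^sub>R (z + (fst q0 - snd q0))" "y - (1/2) *\<^sub>R (z + (fst q0 - snd q0))"] by simp
      ultimately show ?thesis by (simp add: dist_norm norm_minus_commute)
    qed
    show "\<Inter>G \<noteq> {}" if "finite G" "G \<subseteq> F" for G
    proof -
      have "G \<subseteq> S ` M" using that(2) by (simp add: F_def)
      from finite_subset_image[OF that(1) this] obtain M' where M'M: "M' \<subseteq> M" and finM': "finite M'" and G: "G = S ` M'"
        by blast
      define P where "P = (\<lambda>q. (fst q + snd q, fst q - snd q)) ` M'"
      have "\<exists>w. \<forall>(a,y)\<in>P. norm (w - y) \<le> norm (z - a)"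
      proof (rule kirszbraun_finite)
        show "finite P" using finM' by (simp add: P_def)
        fix a y a' y' assume "(a,y) \<in> P" "(a',y') \<in> P"
        then obtain q q' where q0: "q \<in> M'" "q' \<in> M'" and a: "a = fst q + snd q" "y = fst q - snd q"
          and a': "a' = fst q' + snd q'" "y' = fst q' - snd q'"
          unfolding P_def by (auto simp: image_iff)
        have q: "q \<in> M" "q' \<in> M" using q0 M'M by auto
        define D where "D = fst q - fst q'"
        define E where "E = snd q - snd q'"
        have ip: "inner D E \<ge> 0" using mM q unfolding monoset_def D_def E_def by blast
        have "norm (y - y')^2 = norm (D - E)^2" by (simp add: a a' D_def E_def algebra_simps)
        also have "\<dots> = norm D ^2 - 2 * inner D E + norm E ^2" by (rule norm_diff_sq)
        also have "\<dots> \<le> norm D ^2 + 2 * inner D E + norm E ^2" using ip by simp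
        also have "\<dots> = norm (D + E)^2" by (simp add: norm_add_sq)
        also have "\<dots> = norm (a - a')^2" by (simp add: a a' D_def E_def algebra_simps)
        finally show "norm (y - y') \<le> norm (a - a')" using power2_le_imp_le by fastforce
      qed
      then obtain w' where w': "\<And>a y. (a,y) \<in> P \<Longrightarrow> norm (w' - y) \<le> norm (z - a)" by blast
      define w where "w = (1/2) *\<^sub>R (z + w')"
      have "w \<in> S q" if "q \<in> M'" for q
      proof -
        have "norm (w' - (fst q - snd q)) \<le> norm (z - (fst q + snd q))"
          using w'[of "fst q + snd q" "fst q - snd q"] that by (auto simp: P_def)
        moreover have "2 *\<^sub>R w - z - (fst q - snd q) = w' - (fst q - snd q)"
          by (simp add: w_def algebra_simps scaleR_2)
        ultimately have "norm (2 *\<^sub>R w - z - (fst q - snd q)) \<le> norm (z - (fst q + snd q))" by simp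
        hence "norm (2 *\<^sub>R w - z - (fst q - snd q))^2 \<le> norm (z - (fst q + snd q))^2"
          by (simp add: power_mono)
        thus ?thesis unfolding S_def mem_Collect_eq firm_identity by simp
      qed
      thus ?thesis unfolding G by blast
    qed
  qed
  then obtain w where "w \<in> \<Inter>F" by blast
  hence "\<forall>q\<in>M. inner (w - fst q) ((z - w) - snd q) \<ge> 0" unfolding F_def S_def by auto
  thus ?thesis by blast
qed

theorem mono_full_ext:
  fixes M0 :: "('a::{real_inner,complete_space} \<times> 'a) set"
  assumes m0: "monoset M0" and ne: "M0 \<noteq> {}"
  shows "\<exists>M. M0 \<subseteq> M \<and> monoset M \<and> (\<forall>z. \<exists>w. (w, z - w) \<in> M)"
proof -
  define \<A> where "\<A> = {M. M0 \<subseteq> M \<and> monoset M}"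
  have "\<exists>M\<in>\<A>. \<forall>X\<in>\<A>. M \<subseteq> X \<longrightarrow> X = M"
  proof (rule subset_Zorn_nonempty)
    show "\<A> \<noteq> {}" using m0 by (auto simp: \<A>_def)
    fix \<C> assume Cne: "\<C> \<noteq> {}" and ch: "subset.chain \<A> \<C>"
    from ch have CA: "\<C> \<subseteq> \<A>" and cmp: "\<And>X Y. X \<in> \<C> \<Longrightarrow> Y \<in> \<C> \<Longrightarrow> X \<subseteq> Y \<or> Y \<subseteq> X"
      by (auto simp: subset_chain_def)
    have "M0 \<subseteq> \<Union>\<C>" using Cne CA by (auto simp: \<A>_def)
    moreover have "monoset (\<Union>\<C>)"
      unfolding monoset_def
    proof (intro ballI)
      fix p q assume "p \<in> \<Union>\<C>" "q \<in> \<Union>\<C>"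
      then obtain X Y where X: "X \<in> \<C>" "p \<in> X" and Y: "Y \<in> \<C>" "q \<in> Y" by blast
      from cmp[OF X(1) Y(1)] obtain Z where "Z \<in> \<C>" "p \<in> Z" "q \<in> Z" using X Y by blast
      hence "monoset Z" using CA by (auto simp: \<A>_def)
      thus "inner (fst p - fst q) (snd p - snd q) \<ge> 0" using \<open>p \<in> Z\<close> \<open>q \<in> Z\<close>
        unfolding monoset_def by blast
    qed
    ultimately show "\<Union>\<C> \<in> \<A>" by (simp add: \<A>_def)
  qed
  then obtain M where MA: "M \<in> \<A>" and mx: "\<And>X. X \<in> \<A> \<Longrightarrow> M \<subseteq> X \<Longrightarrow> X = M" by blast
  have "\<exists>w. (w, z - w) \<in> M" for z
  proof -
    have mM: "monoset M" and M0M: "M0 \<subseteq> M" using MA by (auto simp: \<A>_def)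
    have "M \<noteq> {}" using M0M ne by blast
    from one_point_ext[OF mM this, of z] obtain w
      where w: "\<forall>q\<in>M. inner (w - fst q) ((z - w) - snd q) \<ge> 0" by blast
    have "monoset (insert (w, z - w) M)"
      unfolding monoset_def
    proof (intro ballI)
      fix p q assume p: "p \<in> insert (w, z - w) M" and q: "q \<in> insert (w, z - w) M"
      show "inner (fst p - fst q) (snd p - snd q) \<ge> 0"
      proof (cases "p = (w, z - w)")
        case pT: True
        show ?thesis
        proof (cases "q = (w, z - w)")
          case True thus ?thesis using pT by simp
        next
          case False thus ?thesis using pT q w by auto
        qed
      next
        case pF: False
        hence pM: "p \<in> M" using p by simp
        show ?thesis
        proof (cases "q = (w, z - w)")
          case True
          have "inner (w - fst p) ((z - w) - snd p) \<ge> 0" using w pM by blast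
          moreover have "inner (fst p - w) (snd p - (z - w)) = inner (w - fst p) ((z - w) - snd p)"
            by (simp add: inner_diff_left inner_diff_right)
          ultimately show ?thesis using True by simp
        next
          case False thus ?thesis using pM q mM unfolding monoset_def by auto
        qed
      qed
    qed
    hence "insert (w, z - w) M \<in> \<A>" using M0M by (auto simp: \<A>_def)
    hence "insert (w, z - w) M = M" using mx by blast
    thus ?thesis by blast
  qed
  thus ?thesis using MA by (auto simp: \<A>_def)
qed


lemma weak_core:
  fixes v :: "nat \<Rightarrow> 'a::real_inner"
  assumes nv: "\<And>k. norm (v k) \<le> 1"
    and orth: "\<And>i. ((\<lambda>k. inner (v i) (v k)) \<longlongrightarrow> 0) sequentially"
    and e0: "\<epsilon> > 0"
    and freq: "\<And>K. \<exists>k\<ge>K. inner (v k) y \<ge> \<epsilon>"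
  shows False
proof -
  obtain N :: nat where N: "real N > 2 * norm y ^2 / \<epsilon>^2 + 1" using reals_Archimedean2 by blast
  have N1: "real N \<ge> 1" using N e0 by (smt (verit) divide_nonneg_pos zero_le_power2 zero_less_power)
  have step: "\<exists>k. k > a \<and> inner (v k) y \<ge> \<epsilon> \<and> (\<forall>m\<le>a. \<bar>inner (v m) (v k)\<bar> \<le> 1 / N)" for a
  proof -
    have "\<forall>\<^sub>F k in sequentially. \<forall>m\<in>{..a}. \<bar>inner (v m) (v k)\<bar> \<le> 1 / N"
    proof (rule eventually_ball_finite[OF finite_atMost], rule ballI)
      fix m
      have "((\<lambda>k. inner (v m) (v k)) \<longlongrightarrow> 0) sequentially" by (rule orth)
      moreover have "(1::real) / N > 0" using N1 by simp
      ultimately have "\<forall>\<^sub>F k in sequentially. dist (inner (v m) (v k)) 0 < 1 / N"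
        by (rule tendstoD)
      thus "\<forall>\<^sub>F k in sequentially. \<bar>inner (v m) (v k)\<bar> \<le> 1 / N"
        by eventually_elim simp
    qed
    then obtain K where K: "\<And>k. k \<ge> K \<Longrightarrow> \<forall>m\<in>{..a}. \<bar>inner (v m) (v k)\<bar> \<le> 1 / N"
      unfolding eventually_sequentially by blast
    obtain k where k: "k \<ge> max K (Suc a)" "inner (v k) y \<ge> \<epsilon>" using freq by blast
    show ?thesis using K[of k] k by (intro exI[of _ k]) auto
  qed
  obtain k0 where k0: "inner (v k0) y \<ge> \<epsilon>" using freq by blast
  define g where "g = rec_nat k0 (\<lambda>i a. SOME k. k > a \<and> inner (v k) y \<ge> \<epsilon> \<and> (\<forall>m\<le>a. \<bar>inner (v m) (v k)\<bar> \<le> 1 / N))"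
  have g0: "g 0 = k0" by (simp add: g_def)
  have gS: "g (Suc i) > g i \<and> inner (v (g (Suc i))) y \<ge> \<epsilon> \<and> (\<forall>m\<le>g i. \<bar>inner (v m) (v (g (Suc i)))\<bar> \<le> 1 / N)" for i
  proof -
    have "g (Suc i) = (SOME k. k > g i \<and> inner (v k) y \<ge> \<epsilon> \<and> (\<forall>m\<le>g i. \<bar>inner (v m) (v k)\<bar> \<le> 1 / N))"
      by (simp add: g_def)
    thus ?thesis using someI_ex[OF step[of "g i"]] by simp
  qed
  have gsm: "strict_mono g" using gS by (intro strict_monoI_Suc) auto
  have gy: "inner (v (g i)) y \<ge> \<epsilon>" for i
    using gS[of "i - 1"] k0 g0 by (cases i) auto
  have gorth: "\<bar>inner (v (g j)) (v (g i))\<bar> \<le> 1 / N" if ji: "j < i" for i j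
  proof -
    obtain i' where i': "i = Suc i'" using ji by (cases i) auto
    have "g j \<le> g i'" using ji i' gsm by (simp add: strict_mono_less_eq)
    thus ?thesis using gS[of i'] i' by auto
  qed
  have gorth2: "inner (v (g i)) (v (g j)) \<le> (if i = j then 1 else 0) + 1 / N" for i j
  proof (cases "i = j")
    case True
    have "inner (v (g i)) (v (g i)) = norm (v (g i))^2" by (simp add: power2_norm_eq_inner)
    also have "\<dots> \<le> 1" using nv[of "g i"] by (simp add: power_le_one)
    finally have "inner (v (g i)) (v (g i)) \<le> 1" .
    moreover have "(0::real) \<le> 1 / N" by simp
    ultimately have "inner (v (g i)) (v (g i)) \<le> 1 + 1 / N" by linarith
    thus ?thesis using True by simp
  next
    case False
    hence "j < i \<or> i < j" by arith
    hence "\<bar>inner (v (g i)) (v (g j))\<bar> \<le> 1 / N"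
      using gorth[of j i] gorth[of i j] by (auto simp: inner_commute)
    thus ?thesis using False by simp
  qed
  define S where "S = (\<Sum>i<N. v (g i))"
  have Sy: "inner S y \<ge> N * \<epsilon>"
  proof -
    have "inner S y = (\<Sum>i<N. inner (v (g i)) y)" by (simp add: S_def inner_sum_left)
    also have "\<dots> \<ge> (\<Sum>i<N. \<epsilon>)" using gy by (intro sum_mono) auto
    finally show ?thesis by simp
  qed
  have SS: "norm S ^2 \<le> 2 * N"
  proof -
    have "norm S ^2 = (\<Sum>i<N. \<Sum>j<N. inner (v (g i)) (v (g j)))"
      by (simp add: S_def power2_norm_eq_inner inner_sum_left inner_sum_right) (subst sum.swap, simp add: inner_commute)
    also have "\<dots> \<le> (\<Sum>i<N. \<Sum>j<N. (if i = j then 1 else 0) + 1 / N)"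
      using gorth2 by (intro sum_mono) auto
    also have "\<dots> = (\<Sum>i<N. 1 + N * (1 / N))"
      by (simp add: sum.distrib)
    also have "\<dots> = 2 * N" using N1 by simp
    finally show ?thesis .
  qed
  have "N * \<epsilon> \<le> norm S * norm y" using Sy Cauchy_Schwarz_ineq2[of S y] by linarith
  hence "(N * \<epsilon>)^2 \<le> (norm S * norm y)^2" using e0 by (intro power_mono) auto
  also have "\<dots> = norm S ^2 * norm y ^2" by (simp add: power_mult_distrib)
  also have "\<dots> \<le> (2 * N) * norm y ^2" using SS by (intro mult_right_mono) auto
  finally have "N * (N * \<epsilon>^2) \<le> N * (2 * norm y ^2)" by (simp add: power_mult_distrib power2_eq_square algebra_simps)
  hence "N * \<epsilon>^2 \<le> 2 * norm y ^2" using N1 by simp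
  moreover have "N * \<epsilon>^2 > 2 * norm y ^2"
  proof -
    have "real N > 2 * norm y ^2 / \<epsilon>^2" using N by linarith
    thus ?thesis using e0 by (simp add: field_simps)
  qed
  ultimately show False by linarith
qed

lemma weak_null:
  fixes v :: "nat \<Rightarrow> 'a::real_inner"
  assumes nv: "\<And>k. norm (v k) \<le> 1"
    and orth: "\<And>i. ((\<lambda>k. inner (v i) (v k)) \<longlongrightarrow> 0) sequentially"
  shows "((\<lambda>k. inner (v k) y) \<longlongrightarrow> 0) sequentially"
proof (rule ccontr)
  assume nt: "\<not> ?thesis"
  then obtain \<epsilon> where e0: "\<epsilon> > 0" and fr: "\<And>K. \<exists>k\<ge>K. \<bar>inner (v k) y\<bar> \<ge> \<epsilon>"
    unfolding LIMSEQ_def dist_real_def by (auto simp: not_less)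
  show False
  proof (cases "\<forall>K. \<exists>k\<ge>K. inner (v k) y \<ge> \<epsilon>")
    case True
    thus False using weak_core[OF nv orth e0] by blast
  next
    case False
    hence "\<exists>K0. \<forall>k\<ge>K0. inner (v k) y < \<epsilon>" by (metis not_le)
    then obtain K0 where K0: "\<And>k. k \<ge> K0 \<Longrightarrow> inner (v k) y < \<epsilon>" by blast
    have "\<exists>k\<ge>K. inner (v k) (- y) \<ge> \<epsilon>" for K
    proof -
      obtain k where k: "k \<ge> max K K0" "\<bar>inner (v k) y\<bar> \<ge> \<epsilon>" using fr by blast
      hence "inner (v k) y < \<epsilon>" using K0 by auto
      with k have "inner (v k) y \<le> - \<epsilon>" by linarith
      thus ?thesis using k by (intro exI[of _ k]) auto
    qed
    thus False using weak_core[OF nv orth e0] by blast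
  qed
qed


lemma exp_ineq_key:
  fixes p q :: real
  assumes p0: "0 \<le> p" and p1: "p \<le> 1/32" and q: "q \<ge> p + 32 * p\<^sup>2"
  shows "exp p + exp (- q) \<le> 2"
proof -
  have q0: "q \<ge> 0" using p0 q by (smt (verit) zero_le_power2)
  have e1: "exp p \<le> 1 + p + p\<^sup>2" using exp_bound[of p] p0 p1 by simp
  have e2: "exp (- q) \<le> 1 / (1 + q)"
  proof -
    have "1 + q \<le> exp q" by (rule exp_ge_add_one_self)
    hence "1 / exp q \<le> 1 / (1 + q)" using q0 by (intro divide_left_mono) auto
    thus ?thesis by (simp add: exp_minus inverse_eq_divide)
  qed
  have pp: "p\<^sup>2 \<le> p / 32" using mult_left_mono[of p "1/32" p] p0 p1 by (simp add: power2_eq_square)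
  have pos: "1 - p - p\<^sup>2 > 0" using p0 p1 pp by linarith
  have "(1 - p - p\<^sup>2) * (1 + q) \<ge> (1 - p - p\<^sup>2) * (1 + p + 32 * p\<^sup>2)"
    using pos q by (intro mult_left_mono) auto
  moreover have "(1 - p - p\<^sup>2) * (1 + p + 32 * p\<^sup>2) \<ge> 1"
  proof -
    have "(1 - p - p\<^sup>2) * (1 + p + 32 * p\<^sup>2) = 1 + p\<^sup>2 * (30 - 33 * p - 32 * p\<^sup>2)"
      by (simp add: power2_eq_square algebra_simps)
    moreover have "30 - 33 * p - 32 * p\<^sup>2 \<ge> 0" using p0 p1 pp by linarith
    ultimately show ?thesis by (simp add: zero_le_mult_iff)
  qed
  ultimately have "(1 - p - p\<^sup>2) * (1 + q) \<ge> 1" by linarith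
  hence "1 / (1 + q) \<le> 1 - p - p\<^sup>2" using q0 by (simp add: field_simps)
  with e1 e2 show ?thesis by linarith
qed

locale seq71 =
  fixes u :: "real \<Rightarrow> 'a::{real_inner, complete_space}"
    and d t \<rho> :: "nat \<Rightarrow> real"
    and x :: "nat \<Rightarrow> 'a"
  assumes u_inner: "\<And>s r. s \<ge> 0 \<Longrightarrow> r \<ge> 0 \<Longrightarrow> inner (u s) (u r) = exp (- (s - r)\<^sup>2)"
    and d_pos: "\<And>n. n \<ge> 1 \<Longrightarrow> d n > 0"
    and t_def: "\<And>n. t n = (\<Sum>k = 1..<n. d k)"
    and t_top: "filterlim t at_top sequentially"
    and d1: "d 1 \<le> 1/8"
    and d_dec: "\<And>n. n \<ge> 1 \<Longrightarrow> d (Suc n) \<le> d n / (1 + 64 * (d n)\<^sup>2)"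
    and rho1: "\<rho> 1 = 1"
    and rho_Suc: "\<And>n. n \<ge> 1 \<Longrightarrow> \<rho> (Suc n) = \<rho> n * exp (- (d n)\<^sup>2)"
    and x_def: "\<And>n. n \<ge> 1 \<Longrightarrow> x n = \<rho> n *\<^sub>R u (t n)"
begin

lemma t_Suc: "n \<ge> 1 \<Longrightarrow> t (Suc n) = t n + d n"
  by (simp add: t_def)

lemma t_nonneg: "t n \<ge> 0"
  unfolding t_def using d_pos by (intro sum_nonneg) (auto simp: less_imp_le)

lemma t_mono: "m \<le> n \<Longrightarrow> t m \<le> t n"
  unfolding t_def using d_pos by (intro sum_mono2) (auto simp: less_imp_le)

lemma d_le: "n \<ge> 1 \<Longrightarrow> d (Suc n) \<le> d n"
proof -
  assume n: "n \<ge> 1"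
  have "d n / (1 + 64 * (d n)\<^sup>2) \<le> d n / 1"
    using d_pos[OF n] by (intro divide_left_mono) (auto intro: add_pos_nonneg)
  thus ?thesis using d_dec[OF n] by linarith
qed

lemma d_antimono:
  assumes m1: "1 \<le> m" and mn: "m \<le> n" shows "d n \<le> d m"
  using mn
proof (induction n rule: dec_induct)
  case base thus ?case by simp
next
  case (step n) thus ?case using d_le[of n] m1 by linarith
qed

lemma rho1': "\<rho> (Suc 0) = 1" using rho1 by simp

lemma rho_pos: "n \<ge> 1 \<Longrightarrow> \<rho> n > 0"
proof (induction n rule: nat_induct_at_least)
  case base thus ?case by (simp add: rho1')
next
  case (Suc n) thus ?case by (simp add: rho_Suc)
qed

lemma rho_le1: "n \<ge> 1 \<Longrightarrow> \<rho> n \<le> 1"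
proof (induction n rule: nat_induct_at_least)
  case base thus ?case by (simp add: rho1')
next
  case (Suc n)
  have "exp (- (d n)\<^sup>2) \<le> 1" by simp
  hence "\<rho> n * exp (- (d n)\<^sup>2) \<le> \<rho> n * 1" using rho_pos[OF Suc(1)] by (intro mult_left_mono) auto
  thus ?case using Suc by (simp add: rho_Suc)
qed

lemma rho_formula: "n \<ge> 1 \<Longrightarrow> \<rho> n = exp (- (\<Sum>k = 1..<n. (d k)\<^sup>2))"
proof (induction n rule: nat_induct_at_least)
  case base thus ?case by (simp add: rho1')
next
  case (Suc n) thus ?case by (simp add: rho_Suc exp_add[symmetric])
qed

lemma u_norm: "s \<ge> 0 \<Longrightarrow> norm (u s) = 1"
  using u_inner[of s s] by (simp add: norm_eq_sqrt_inner)

lemma x_inner: "i \<ge> 1 \<Longrightarrow> j \<ge> 1 \<Longrightarrow> inner (x i) (x j) = \<rho> i * \<rho> j * exp (- (t i - t j)\<^sup>2)"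
  using u_inner[OF t_nonneg t_nonneg] by (simp add: x_def)

lemma x_norm: "i \<ge> 1 \<Longrightarrow> norm (x i) = \<rho> i"
  using u_norm[OF t_nonneg] rho_pos[of i] by (simp add: x_def)

lemma x_inner_self: "i \<ge> 1 \<Longrightarrow> inner (x i) (x i) = (\<rho> i)\<^sup>2"
  using x_norm[of i] power2_norm_eq_inner[of "x i"] by simp

lemma x_norm_le1: "i \<ge> 1 \<Longrightarrow> norm (x i) \<le> 1"
  using x_norm rho_le1 by simp

lemma x_Suc_inner: "k \<ge> 1 \<Longrightarrow> inner (x (Suc k)) (x k) = (\<rho> (Suc k))\<^sup>2"
proof -
  assume k: "k \<ge> 1"
  have "inner (x (Suc k)) (x k) = \<rho> (Suc k) * \<rho> k * exp (- (t (Suc k) - t k)\<^sup>2)"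
    using x_inner[of "Suc k" k] k by simp
  also have "t (Suc k) - t k = d k" using t_Suc[OF k] by simp
  also have "\<rho> (Suc k) * \<rho> k * exp (- (d k)\<^sup>2) = \<rho> (Suc k) * \<rho> (Suc k)"
    using rho_Suc[OF k] by simp
  finally show ?thesis by (simp add: power2_eq_square)
qed

lemma dt_bound: "n \<ge> 1 \<Longrightarrow> d n * t (Suc n) \<le> 1/64"
proof (induction n rule: nat_induct_at_least)
  case base
  have "t (Suc 1) = d 1" by (simp add: t_def)
  moreover have "d 1 * d 1 \<le> (1/8) * (1/8)" using d1 d_pos[of 1] by (intro mult_mono) auto
  ultimately show ?case by simp
next
  case (Suc n)
  have n: "n \<ge> 1" by fact
  define a where "a = d n"
  define a' where "a' = d (Suc n)"
  define T where "T = t (Suc n)"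
  have a0: "a > 0" using d_pos[OF n] by (simp add: a_def)
  have a'0: "a' > 0" using d_pos[of "Suc n"] n by (simp add: a'_def)
  have a'a: "a' \<le> a" using d_le[OF n] by (simp add: a_def a'_def)
  have T0: "T \<ge> 0" by (simp add: T_def t_nonneg)
  have IH: "a * T \<le> 1/64" using Suc by (simp add: a_def T_def)
  have pp: "1 + 64 * a\<^sup>2 > 0" by (simp add: add_pos_nonneg)
  have dd: "a' * (1 + 64 * a\<^sup>2) \<le> a" using d_dec[OF n] pp by (simp add: a_def a'_def pos_le_divide_eq)
  have tS: "t (Suc (Suc n)) = T + a'" using t_Suc[of "Suc n"] n by (simp add: T_def a'_def)
  have "a' * (T + a') \<le> a' * (T + a)" using a'0 a'a by (intro mult_left_mono) auto
  also have "\<dots> * (1 + 64 * a\<^sup>2) \<le> a * (T + a)"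
  proof -
    have "a' * (T + a) * (1 + 64 * a\<^sup>2) = (a' * (1 + 64 * a\<^sup>2)) * (T + a)" by (simp add: algebra_simps)
    also have "\<dots> \<le> a * (T + a)" using dd T0 a0 by (intro mult_right_mono) auto
    finally show ?thesis .
  qed
  moreover have "a * (T + a) \<le> (1/64) * (1 + 64 * a\<^sup>2)"
    using IH by (simp add: algebra_simps power2_eq_square)
  ultimately have "a' * (T + a') * (1 + 64 * a\<^sup>2) \<le> (1/64) * (1 + 64 * a\<^sup>2)"
  proof -
    assume h1: "a' * (T + a') \<le> a' * (T + a)"
       and h2: "a' * (T + a) * (1 + 64 * a\<^sup>2) \<le> a * (T + a)"
       and h3: "a * (T + a) \<le> 1 / 64 * (1 + 64 * a\<^sup>2)"
    have "a' * (T + a') * (1 + 64 * a\<^sup>2) \<le> a' * (T + a) * (1 + 64 * a\<^sup>2)"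
      using h1 by (intro mult_right_mono) auto
    thus ?thesis using h2 h3 by linarith
  qed
  hence "a' * (T + a') \<le> 1/64" by (smt (verit) mult_le_cancel_right zero_le_power2)
  thus ?case by (simp add: tS a'_def)
qed

lemma d_gap:
  assumes m1: "1 \<le> m" and mn: "m \<le> n"
  shows "d m \<ge> d n + 64 * (d n)\<^sup>2 * (t (Suc n) - t (Suc m))"
  using mn
proof (induction n rule: dec_induct)
  case base thus ?case by simp
next
  case (step n)
  have n: "n \<ge> 1" using step m1 by simp
  define a where "a = d n"
  define a' where "a' = d (Suc n)"
  define T where "T = t (Suc n) - t (Suc m)"
  have a0: "a > 0" using d_pos[OF n] by (simp add: a_def)
  have a'0: "a' > 0" using d_pos[of "Suc n"] n by (simp add: a'_def)
  have a'a: "a' \<le> a" using d_le[OF n] by (simp add: a_def a'_def)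
  have T0: "T \<ge> 0" using t_mono[of "Suc m" "Suc n"] step by (simp add: T_def)
  have pp: "1 + 64 * a\<^sup>2 > 0" by (simp add: add_pos_nonneg)
  have dd: "a' * (1 + 64 * a\<^sup>2) \<le> a" using d_dec[OF n] pp by (simp add: a_def a'_def pos_le_divide_eq)
  have IH: "d m \<ge> a + 64 * a\<^sup>2 * T" using step by (simp add: a_def T_def)
  have tS: "t (Suc (Suc n)) - t (Suc m) = T + a'" using t_Suc[of "Suc n"] n by (simp add: T_def a'_def)
  have "a'\<^sup>2 \<le> a\<^sup>2" using a'a a'0 by (intro power_mono) auto
  hence 1: "64 * a'\<^sup>2 * T \<le> 64 * a\<^sup>2 * T" using T0 by (intro mult_right_mono) auto
  have "a' + 64 * a'\<^sup>2 * a' \<le> a' + 64 * a\<^sup>2 * a'" using \<open>a'\<^sup>2 \<le> a\<^sup>2\<close> a'0 by (intro add_left_mono mult_right_mono) auto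
  also have "\<dots> \<le> a" using dd by (simp add: algebra_simps)
  finally have 2: "a' + 64 * a'\<^sup>2 * a' \<le> a" .
  have "a' + 64 * a'\<^sup>2 * (T + a') = a' + 64 * a'\<^sup>2 * a' + 64 * a'\<^sup>2 * T" by (simp add: algebra_simps)
  also have "\<dots> \<le> a + 64 * a\<^sup>2 * T" using 1 2 by linarith
  also have "\<dots> \<le> d m" using IH .
  finally show ?case by (simp add: tS a'_def)
qed

lemma base_mono_lt:
  assumes m1: "1 \<le> m" and mn: "m < n"
  shows "inner (x (Suc m) - x (Suc n)) ((x m - x (Suc m)) - (x n - x (Suc n))) \<ge> 0"
proof -
  have n1: "1 \<le> n" using m1 mn by simp
  define G where "G i j = inner (x i) (x j)" for i j
  have expand: "inner (x (Suc m) - x (Suc n)) ((x m - x (Suc m)) - (x n - x (Suc n)))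
     = G (Suc m) m - G (Suc m) (Suc m) - G (Suc m) n + G (Suc m) (Suc n)
       - G (Suc n) m + G (Suc n) (Suc m) + G (Suc n) n - G (Suc n) (Suc n)"
    by (simp add: G_def inner_diff_left inner_diff_right)
  have g1: "G (Suc m) m = G (Suc m) (Suc m)"
    using x_Suc_inner[OF m1] x_inner_self[of "Suc m"] by (simp add: G_def)
  have g2: "G (Suc n) n = G (Suc n) (Suc n)"
    using x_Suc_inner[OF n1] x_inner_self[of "Suc n"] by (simp add: G_def)
  have g3: "G (Suc n) (Suc m) = G (Suc m) (Suc n)" by (simp add: G_def inner_commute)
  define a where "a = d n"
  define b where "b = d m"
  define s where "s = t (Suc n) - t (Suc m)"
  define R where "R = \<rho> (Suc m) * \<rho> (Suc n)"
  have a0: "a > 0" using d_pos[OF n1] by (simp add: a_def)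
  have s0: "s \<ge> 0" using t_mono[of "Suc m" "Suc n"] mn by (simp add: s_def)
  have R0: "R > 0" using rho_pos[of "Suc m"] rho_pos[of "Suc n"] by (simp add: R_def)
  have tn: "t n = t (Suc n) - a" using t_Suc[OF n1] by (simp add: a_def)
  have tm: "t m = t (Suc m) - b" using t_Suc[OF m1] by (simp add: b_def)
  have rn: "\<rho> n = \<rho> (Suc n) * exp (a\<^sup>2)"
    using rho_Suc[OF n1] by (simp add: a_def exp_minus field_simps)
  have rm: "\<rho> m = \<rho> (Suc m) * exp (b\<^sup>2)"
    using rho_Suc[OF m1] by (simp add: b_def exp_minus field_simps)
  have G1: "G (Suc m) (Suc n) = R * exp (- (s\<^sup>2))"
    using x_inner[of "Suc m" "Suc n"] by (simp add: G_def R_def s_def power2_commute)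
  have G2: "G (Suc m) n = R * exp (- (s\<^sup>2)) * exp (2 * a * s)"
  proof -
    have "G (Suc m) n = \<rho> (Suc m) * \<rho> n * exp (- (t (Suc m) - t n)\<^sup>2)"
      using x_inner[of "Suc m" n] n1 by (simp add: G_def)
    also have "\<dots> = R * (exp (a\<^sup>2) * exp (- (t (Suc m) - t n)\<^sup>2))"
      by (simp add: rn R_def)
    also have "exp (a\<^sup>2) * exp (- (t (Suc m) - t n)\<^sup>2) = exp (a\<^sup>2 + - (t (Suc m) - t n)\<^sup>2)"
      by (simp add: mult_exp_exp)
    also have "a\<^sup>2 + - (t (Suc m) - t n)\<^sup>2 = - (s\<^sup>2) + 2 * a * s"
      by (simp add: tn s_def power2_eq_square algebra_simps)
    finally show ?thesis unfolding exp_add by (simp add: mult.assoc)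
  qed
  have G3: "G (Suc n) m = R * exp (- (s\<^sup>2)) * exp (- (2 * b * s))"
  proof -
    have "G (Suc n) m = \<rho> (Suc n) * \<rho> m * exp (- (t (Suc n) - t m)\<^sup>2)"
      using x_inner[of "Suc n" m] m1 by (simp add: G_def)
    also have "\<dots> = R * (exp (b\<^sup>2) * exp (- (t (Suc n) - t m)\<^sup>2))"
      by (simp add: rm R_def)
    also have "exp (b\<^sup>2) * exp (- (t (Suc n) - t m)\<^sup>2) = exp (b\<^sup>2 + - (t (Suc n) - t m)\<^sup>2)"
      by (simp add: mult_exp_exp)
    also have "b\<^sup>2 + - (t (Suc n) - t m)\<^sup>2 = - (s\<^sup>2) + - (2 * b * s)"
      by (simp add: tm s_def power2_eq_square algebra_simps)
    finally show ?thesis unfolding exp_add by (simp add: mult.assoc)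
  qed
  define p where "p = 2 * a * s"
  have p0: "p \<ge> 0" using a0 s0 by (simp add: p_def)
  have p1: "p \<le> 1/32"
  proof -
    have "a * s \<le> a * t (Suc n)" using a0 t_nonneg[of "Suc m"] by (intro mult_left_mono) (auto simp: s_def)
    also have "\<dots> \<le> 1/64" using dt_bound[OF n1] by (simp add: a_def)
    finally show ?thesis by (simp add: p_def)
  qed
  have gap: "b \<ge> a + 64 * a\<^sup>2 * s" using d_gap[OF m1 less_imp_le[OF mn]] by (simp add: a_def b_def s_def)
  have q: "2 * b * s \<ge> p + 32 * p\<^sup>2"
  proof -
    have "2 * b * s \<ge> 2 * (a + 64 * a\<^sup>2 * s) * s" using gap s0 by (intro mult_right_mono) auto
    also have "2 * (a + 64 * a\<^sup>2 * s) * s = p + 32 * p\<^sup>2" by (simp add: p_def power2_eq_square algebra_simps)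
    finally show ?thesis .
  qed
  have key: "exp p + exp (- (2 * b * s)) \<le> 2" by (rule exp_ineq_key[OF p0 p1 q])
  have "inner (x (Suc m) - x (Suc n)) ((x m - x (Suc m)) - (x n - x (Suc n)))
        = 2 * G (Suc m) (Suc n) - G (Suc m) n - G (Suc n) m"
    unfolding expand g1 g2 g3 by simp
  also have "\<dots> = R * exp (- (s\<^sup>2)) * (2 - exp p - exp (- (2 * b * s)))"
    unfolding G1 G2 G3 p_def by (simp add: algebra_simps)
  also have "\<dots> \<ge> 0" using R0 key by (intro mult_nonneg_nonneg) auto
  finally show ?thesis .
qed

lemma base_mono:
  assumes "1 \<le> m" "1 \<le> n"
  shows "inner (x (Suc m) - x (Suc n)) ((x m - x (Suc m)) - (x n - x (Suc n))) \<ge> 0"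
proof -
  consider "m < n" | "m = n" | "n < m" by arith
  thus ?thesis
  proof cases
    case 1 thus ?thesis using base_mono_lt assms by blast
  next
    case 2 thus ?thesis by simp
  next
    case 3
    have "inner (x (Suc n) - x (Suc m)) ((x n - x (Suc n)) - (x m - x (Suc m))) \<ge> 0"
      using base_mono_lt[OF assms(2) 3] .
    moreover have "inner (x (Suc n) - x (Suc m)) ((x n - x (Suc n)) - (x m - x (Suc m)))
        = inner (x (Suc m) - x (Suc n)) ((x m - x (Suc m)) - (x n - x (Suc n)))"
      by (simp add: inner_diff_left inner_diff_right)
    ultimately show ?thesis by simp
  qed
qed

lemma base_zero: "1 \<le> m \<Longrightarrow> inner (x (Suc m)) (x m - x (Suc m)) = 0"
  using x_Suc_inner[of m] x_inner_self[of "Suc m"] by (simp add: inner_diff_right)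

end


context seq71
begin

lemma x_weak: "((\<lambda>k. inner (x k) y) \<longlongrightarrow> 0) sequentially"
proof -
  define v where "v k = u (t k)" for k
  have nv: "norm (v k) \<le> 1" for k using u_norm[OF t_nonneg] by (simp add: v_def)
  have orth: "((\<lambda>k. inner (v i) (v k)) \<longlongrightarrow> 0) sequentially" for i
  proof -
    have eq: "inner (v i) (v k) = exp (- (t i - t k)\<^sup>2)" for k
      using u_inner[OF t_nonneg t_nonneg] by (simp add: v_def)
    have lim1: "filterlim (\<lambda>k. - t i + t k) at_top sequentially"
      by (rule filterlim_tendsto_add_at_top[OF tendsto_const t_top])
    hence "filterlim (\<lambda>k. - (- t i + t k)) at_bot sequentially"
      by (simp add: filterlim_uminus_at_top)
    hence lim2: "((\<lambda>k. exp (- (- t i + t k))) \<longlongrightarrow> 0) sequentially"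
      by (rule filterlim_compose[OF exp_at_bot])
    have ev: "\<forall>\<^sub>F k in sequentially. norm (exp (- (t i - t k)\<^sup>2)) \<le> exp (- (- t i + t k))"
    proof -
      have "\<forall>\<^sub>F k in sequentially. - t i + t k \<ge> 1"
        using lim1 by (simp add: filterlim_at_top)
      thus ?thesis
      proof eventually_elim
        case (elim k)
        have "(t i - t k)\<^sup>2 = (- t i + t k) * (- t i + t k)" by (simp add: power2_eq_square algebra_simps)
        also have "\<dots> \<ge> 1 * (- t i + t k)" using elim by (intro mult_right_mono) auto
        finally show ?case by simp
      qed
    qed
    show ?thesis unfolding eq by (rule Lim_null_comparison[OF ev lim2])
  qed
  have w: "((\<lambda>k. inner (v k) y) \<longlongrightarrow> 0) sequentially" by (rule weak_null[OF nv orth])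
  have ev: "\<forall>\<^sub>F k in sequentially. norm (inner (x k) y) \<le> \<bar>inner (v k) y\<bar>"
  proof (rule eventually_sequentiallyI[of 1])
    fix k :: nat assume k: "k \<ge> 1"
    have "inner (x k) y = \<rho> k * inner (v k) y" using k by (simp add: x_def v_def)
    moreover have "\<bar>\<rho> k\<bar> \<le> 1" using rho_pos[OF k] rho_le1[OF k] by simp
    ultimately show "norm (inner (x k) y) \<le> \<bar>inner (v k) y\<bar>"
      by (simp add: abs_mult mult_left_le_one_le)
  qed
  have "((\<lambda>k. \<bar>inner (v k) y\<bar>) \<longlongrightarrow> 0) sequentially"
    using tendsto_rabs[OF w] by simp
  thus ?thesis by (rule Lim_null_comparison[OF ev])
qed

definition C :: "'a set" where "C = closure (convex hull {x n | n. n \<ge> 2})"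

lemma C_closed: "closed C" by (simp add: C_def)
lemma C_convex: "convex C" by (simp add: C_def convex_closure)
lemma x_in_C: "n \<ge> 2 \<Longrightarrow> x n \<in> C"
  unfolding C_def by (rule subsetD[OF closure_subset], rule hull_inc) auto
lemma C_ne: "C \<noteq> {}" using x_in_C[of 2] by auto

lemma halfspace_C:
  assumes "\<And>n. n \<ge> 2 \<Longrightarrow> inner a (x n) \<le> b" and "y \<in> C"
  shows "inner a y \<le> b"
proof -
  have "{x n | n. n \<ge> 2} \<subseteq> {y. inner a y \<le> b}" using assms(1) by auto
  hence "convex hull {x n | n. n \<ge> 2} \<subseteq> {y. inner a y \<le> b}"
    by (intro hull_minimal) (auto simp: convex_halfspace_le)
  hence "C \<subseteq> {y. inner a y \<le> b}" unfolding C_def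
    by (intro closure_minimal) (auto simp: closed_halfspace_le)
  thus ?thesis using assms(2) by auto
qed

lemma C_bound: "y \<in> C \<Longrightarrow> norm y \<le> 1"
proof -
  assume yC: "y \<in> C"
  have "{x n | n. n \<ge> 2} \<subseteq> cball 0 1" using x_norm_le1 by auto
  hence "convex hull {x n | n. n \<ge> 2} \<subseteq> cball 0 1"
    by (intro hull_minimal) auto
  hence "C \<subseteq> cball 0 1" unfolding C_def by (intro closure_minimal) auto
  thus ?thesis using yC by auto
qed

lemma zero_in_C: "0 \<in> C"
proof -
  obtain p where pC: "p \<in> C" and pm: "\<And>v. v \<in> C \<Longrightarrow> norm (0 - p) \<le> norm (0 - v)"
    using nearest_exists[OF C_closed C_convex C_ne, of 0] by blast
  show ?thesis
  proof (cases "p = 0")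
    case True thus ?thesis using pC by simp
  next
    case False
    have ge: "inner (x n) p \<ge> norm p ^2" if "n \<ge> 2" for n
    proof -
      have "inner (0 - p) (x n - p) \<le> 0"
        using nearest_varineq[OF C_convex pC x_in_C[OF that]] pm by blast
      thus ?thesis by (simp add: inner_diff_right power2_norm_eq_inner inner_commute)
    qed
    have "norm p ^2 \<le> 0"
      using LIMSEQ_le_const[OF x_weak[of p], of "norm p ^2"] ge by blast
    thus ?thesis using False by simp
  qed
qed

definition B :: "('a \<times> 'a) set" where
  "B = {(x (Suc k), x k - x (Suc k)) | k. k \<ge> 1} \<union> {(0, 0)}"

lemma B_mono: "monoset B"
  unfolding monoset_def
proof (intro ballI)
  fix p q assume p: "p \<in> B" and q: "q \<in> B"
  have cp: "p = (0,0) \<or> (\<exists>k\<ge>1. p = (x (Suc k), x k - x (Suc k)))" using p by (auto simp: B_def)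
  have cq: "q = (0,0) \<or> (\<exists>k\<ge>1. q = (x (Suc k), x k - x (Suc k)))" using q by (auto simp: B_def)
  show "inner (fst p - fst q) (snd p - snd q) \<ge> 0"
  proof (cases "p = (0,0)")
    case pT: True
    show ?thesis
    proof (cases "q = (0,0)")
      case True thus ?thesis using pT by simp
    next
      case False
      then obtain k where k: "k \<ge> 1" "q = (x (Suc k), x k - x (Suc k))" using cq by blast
      have "inner (0 - x (Suc k)) (0 - (x k - x (Suc k))) = inner (x (Suc k)) (x k - x (Suc k))"
        by (simp add: inner_diff_right inner_diff_left)
      thus ?thesis using pT k base_zero[of k] by simp
    qed
  next
    case pF: False
    then obtain j where j: "j \<ge> 1" "p = (x (Suc j), x j - x (Suc j))" using cp by blast
    show ?thesis
    proof (cases "q = (0,0)")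
      case True thus ?thesis using j base_zero[of j] by simp
    next
      case False
      then obtain k where k: "k \<ge> 1" "q = (x (Suc k), x k - x (Suc k))" using cq by blast
      show ?thesis using base_mono[of j k] j k by simp
    qed
  qed
qed

lemma B_C: "q \<in> B \<Longrightarrow> fst q \<in> C"
  unfolding B_def using x_in_C zero_in_C by auto

definition M0 :: "('a \<times> 'a) set" where
  "M0 = {(fst q, snd q + nv) | q nv. q \<in> B \<and> (\<forall>y\<in>C. inner nv (y - fst q) \<le> 0)}"

lemma B_M0: "q \<in> B \<Longrightarrow> q \<in> M0"
  unfolding M0_def by (rule CollectI, rule exI[of _ q], rule exI[of _ 0]) auto

lemma M0_mono: "monoset M0"
  unfolding monoset_def
proof (intro ballI)
  fix p1 p2 assume "p1 \<in> M0" "p2 \<in> M0"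
  then obtain q1 n1 q2 n2 where q1: "q1 \<in> B" "\<forall>y\<in>C. inner n1 (y - fst q1) \<le> 0" "p1 = (fst q1, snd q1 + n1)"
    and q2: "q2 \<in> B" "\<forall>y\<in>C. inner n2 (y - fst q2) \<le> 0" "p2 = (fst q2, snd q2 + n2)"
    unfolding M0_def by blast
  have "inner (fst q1 - fst q2) (snd q1 - snd q2) \<ge> 0"
    using B_mono q1(1) q2(1) unfolding monoset_def by blast
  moreover have "inner n1 (fst q2 - fst q1) \<le> 0" using q1(2) B_C[OF q2(1)] by blast
  moreover have "inner n2 (fst q1 - fst q2) \<le> 0" using q2(2) B_C[OF q1(1)] by blast
  moreover have "inner (fst p1 - fst p2) (snd p1 - snd p2)
     = inner (fst q1 - fst q2) (snd q1 - snd q2) - inner n1 (fst q2 - fst q1) - inner n2 (fst q1 - fst q2)"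
    using q1(3) q2(3) by (simp add: inner_diff_left inner_diff_right inner_add_right inner_commute algebra_simps)
  ultimately show "inner (fst p1 - fst p2) (snd p1 - snd p2) \<ge> 0" by linarith
qed

lemma range_in_C:
  assumes mM: "monoset M" and M0M: "M0 \<subseteq> M" and wz: "(w, z - w) \<in> M"
  shows "w \<in> C"
proof (rule ccontr)
  assume wC: "w \<notin> C"
  obtain p where pC: "p \<in> C" and pm: "\<And>v. v \<in> C \<Longrightarrow> norm (w - p) \<le> norm (w - v)"
    using nearest_exists[OF C_closed C_convex C_ne, of w] by blast
  define nv where "nv = w - p"
  have nv0: "nv \<noteq> 0" using wC pC by (auto simp: nv_def)
  define \<sigma> where "\<sigma> = inner nv p"
  have supC: "inner nv y \<le> \<sigma>" if "y \<in> C" for y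
  proof -
    have "inner (w - p) (y - p) \<le> 0" using nearest_varineq[OF C_convex pC that] pm by blast
    thus ?thesis by (simp add: nv_def \<sigma>_def inner_diff_right)
  qed
  have "\<exists>q\<in>B. inner nv (fst q) \<ge> \<sigma>"
  proof (rule ccontr)
    assume "\<not> ?thesis"
    hence lt: "\<And>q. q \<in> B \<Longrightarrow> inner nv (fst q) < \<sigma>" by (auto simp: not_le)
    have s0: "\<sigma> > 0" using lt[of "(0,0)"] by (simp add: B_def)
    have "\<forall>\<^sub>F k in sequentially. dist (inner (x k) nv) 0 < \<sigma> / 2"
      using x_weak[of nv] s0 by (intro tendstoD) auto
    then obtain K where K0: "\<And>k. k \<ge> K \<Longrightarrow> dist (inner (x k) nv) 0 < \<sigma> / 2"
      unfolding eventually_sequentially by blast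
    have K: "inner nv (x k) < \<sigma> / 2" if "k \<ge> K" for k
      using K0[OF that] by (simp add: inner_commute dist_real_def abs_less_iff)
    define F where "F = {k. 2 \<le> k \<and> k \<le> K}"
    have finF: "finite F" by (simp add: F_def)
    define \<mu> where "\<mu> = Max (insert (\<sigma> / 2) ((\<lambda>k. inner nv (x k)) ` F))"
    have xB: "inner nv (x k) < \<sigma>" if k2: "k \<ge> 2" for k
    proof -
      obtain j where j: "k = Suc j" "j \<ge> 1" using k2 by (cases k) auto
      have "(x k, x j - x k) \<in> B" unfolding B_def using j by auto
      from lt[OF this] show ?thesis by simp
    qed
    have \<mu>lt: "\<mu> < \<sigma>" unfolding \<mu>_def using finF s0 xB by (auto simp: F_def)
    have "inner nv (x n) \<le> \<mu>" if "n \<ge> 2" for n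
    proof (cases "n \<le> K")
      case True
      thus ?thesis unfolding \<mu>_def using finF that by (intro Max_ge) (auto simp: F_def)
    next
      case False
      hence "inner nv (x n) < \<sigma> / 2" using K by auto
      moreover have "\<sigma> / 2 \<le> \<mu>" unfolding \<mu>_def using finF by (intro Max_ge) auto
      ultimately show ?thesis by linarith
    qed
    hence "inner nv p \<le> \<mu>" using halfspace_C pC by blast
    thus False using \<mu>lt by (simp add: \<sigma>_def)
  qed
  then obtain q where qB: "q \<in> B" and qs: "inner nv (fst q) \<ge> \<sigma>" by blast
  have qeq: "inner nv (fst q) = \<sigma>" using qs supC[OF B_C[OF qB]] by linarith
  have key: "inner (w - fst q) nv = norm nv ^2"
  proof -
    have "inner (w - fst q) nv = inner (w - p) nv + (inner nv p - inner nv (fst q))"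
      by (simp add: inner_diff_left inner_diff_right inner_commute)
    thus ?thesis using qeq by (simp add: nv_def \<sigma>_def power2_norm_eq_inner)
  qed
  define A where "A = inner (w - fst q) ((z - w) - snd q)"
  define \<tau> where "\<tau> = (\<bar>A\<bar> + 1) / norm nv ^2"
  have np: "norm nv ^2 > 0" using nv0 by simp
  have \<tau>0: "\<tau> \<ge> 0" using np by (simp add: \<tau>_def)
  have "(fst q, snd q + \<tau> *\<^sub>R nv) \<in> M0"
    unfolding M0_def
  proof (rule CollectI, rule exI[of _ q], rule exI[of _ "\<tau> *\<^sub>R nv"], intro conjI)
    show "q \<in> B" by (rule qB)
    show "\<forall>y\<in>C. inner (\<tau> *\<^sub>R nv) (y - fst q) \<le> 0"
    proof
      fix y assume "y \<in> C"
      hence "inner nv y - inner nv (fst q) \<le> 0" using supC qeq by simp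
      hence "\<tau> * (inner nv y - inner nv (fst q)) \<le> 0" using \<tau>0 by (simp add: mult_nonneg_nonpos)
      thus "inner (\<tau> *\<^sub>R nv) (y - fst q) \<le> 0" by (simp add: inner_diff_right right_diff_distrib)
    qed
  qed simp
  hence "(fst q, snd q + \<tau> *\<^sub>R nv) \<in> M" using M0M by blast
  hence "inner (w - fst q) ((z - w) - (snd q + \<tau> *\<^sub>R nv)) \<ge> 0"
    using mM wz unfolding monoset_def by fastforce
  moreover have "inner (w - fst q) ((z - w) - (snd q + \<tau> *\<^sub>R nv)) = A - \<tau> * norm nv ^2"
    using key by (simp add: A_def inner_diff_right inner_add_right algebra_simps)
  moreover have "\<tau> * norm nv ^2 = \<bar>A\<bar> + 1" using np by (simp add: \<tau>_def)
  ultimately show False by linarith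
qed

end


lemma Sdiff_gen:
  fixes a b ta tb c :: "'a::real_vector"
  shows "(a - l *\<^sub>R (l *\<^sub>R a + (1 - l) *\<^sub>R ta - c)) - (b - l *\<^sub>R (l *\<^sub>R b + (1 - l) *\<^sub>R tb - c))
     = (1 - l^2) *\<^sub>R (a - b) - (l * (1 - l)) *\<^sub>R (ta - tb)"
proof -
  have "(a - l *\<^sub>R (l *\<^sub>R a + (1 - l) *\<^sub>R ta - c)) - (b - l *\<^sub>R (l *\<^sub>R b + (1 - l) *\<^sub>R tb - c))
     = (a - b) - (l * l) *\<^sub>R (a - b) - (l * (1 - l)) *\<^sub>R (ta - tb)"
    by (simp add: scaleR_diff_right scaleR_add_right scaleR_diff_left right_diff_distrib algebra_simps)
  also have "\<dots> = (1 - l^2) *\<^sub>R (a - b) - (l * (1 - l)) *\<^sub>R (ta - tb)"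
    by (simp add: power2_eq_square scaleR_diff_left)
  finally show ?thesis .
qed

lemma monosetD:
  assumes "monoset M" "(a, a') \<in> M" "(b, b') \<in> M"
  shows "inner (a - b) (a' - b') \<ge> 0"
proof -
  have "\<forall>p\<in>M. \<forall>q\<in>M. inner (fst p - fst q) (snd p - snd q) \<ge> 0" using assms(1) by (simp add: monoset_def)
  hence "inner (fst (a, a') - fst (b, b')) (snd (a, a') - snd (b, b')) \<ge> 0" using assms(2,3) by blast
  thus ?thesis by simp
qed

context seq71
begin

lemma contraction_bound:
  fixes e D :: 'a and lam :: real
  assumes l0: "0 < lam" and l1: "lam \<le> 1/2"
    and firm: "norm D ^2 \<le> inner e D"
  shows "norm ((1 - lam^2) *\<^sub>R e - (lam * (1 - lam)) *\<^sub>R D) \<le> (1 - lam^2) * norm e"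
proof -
  define \<alpha> where "\<alpha> = 1 - lam^2"
  define \<beta> where "\<beta> = lam * (1 - lam)"
  have a0: "\<alpha> \<ge> 0" using power_le_one[of lam 2] l0 l1 by (simp add: \<alpha>_def)
  have b0: "\<beta> \<ge> 0" using l0 l1 by (simp add: \<beta>_def)
  have ba: "\<beta> \<le> 2 * \<alpha>"
  proof -
    have "2 * \<alpha> - \<beta> = (1 - lam) * (2 + lam)" by (simp add: \<alpha>_def \<beta>_def power2_eq_square algebra_simps)
    also have "\<dots> \<ge> 0" using l0 l1 by simp
    finally show ?thesis by simp
  qed
  have "norm (\<alpha> *\<^sub>R e - \<beta> *\<^sub>R D)^2 = \<alpha>^2 * norm e ^2 - 2 * \<alpha> * \<beta> * inner e D + \<beta>^2 * norm D ^2"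
    by (simp add: norm_diff_sq power_mult_distrib algebra_simps)
  also have "\<dots> \<le> \<alpha>^2 * norm e ^2 - 2 * \<alpha> * \<beta> * norm D ^2 + \<beta>^2 * norm D ^2"
  proof -
    have "2 * \<alpha> * \<beta> * norm D ^2 \<le> 2 * \<alpha> * \<beta> * inner e D"
      using firm a0 b0 by (intro mult_left_mono) auto
    thus ?thesis by linarith
  qed
  also have "\<dots> = \<alpha>^2 * norm e ^2 - \<beta> * norm D ^2 * (2 * \<alpha> - \<beta>)"
    by (simp add: power2_eq_square algebra_simps)
  also have "\<dots> \<le> \<alpha>^2 * norm e ^2"
    using b0 ba by (simp add: mult_nonneg_nonneg)
  also have "\<dots> = (\<alpha> * norm e)^2" by (simp add: power_mult_distrib)
  finally have "norm (\<alpha> *\<^sub>R e - \<beta> *\<^sub>R D)^2 \<le> (\<alpha> * norm e)^2" .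
  hence "norm (\<alpha> *\<^sub>R e - \<beta> *\<^sub>R D) \<le> \<alpha> * norm e"
    by (rule power2_le_imp_le) (use a0 in simp)
  thus ?thesis unfolding \<alpha>_def \<beta>_def .
qed

lemma main_T:
  "\<exists>T. firmly_nonexpansive T \<and> closure (range T) = C \<and> {z. T z = z} = {0}
      \<and> (\<forall>n\<ge>1. T (x n) = x (Suc n))"
proof -
  have B00: "(0,0) \<in> B" by (simp add: B_def)
  have M0ne: "M0 \<noteq> {}" using B_M0[OF B00] by blast
  obtain M where M0M: "M0 \<subseteq> M" and mM: "monoset M" and full: "\<And>z. \<exists>w. (w, z - w) \<in> M"
    using mono_full_ext[OF M0_mono M0ne] by blast
  define T where "T z = (SOME w. (w, z - w) \<in> M)" for z
  have TM: "(T z, z - T z) \<in> M" for z unfolding T_def by (rule someI_ex[OF full])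
  have uniq: "T z = w" if "(w, z - w) \<in> M" for z w
  proof -
    have "inner (T z - w) ((z - T z) - (z - w)) \<ge> 0"
      by (rule monosetD[OF mM TM[of z] that])
    moreover have "inner (T z - w) ((z - T z) - (z - w)) = - ((norm (T z - w))^2)"
      by (simp add: power2_norm_eq_inner inner_diff_left inner_diff_right inner_commute)
    ultimately show ?thesis by simp
  qed
  have firm: "(norm (T a - T b))^2 \<le> inner (a - b) (T a - T b)" for a b
  proof -
    have "inner (T a - T b) ((a - T a) - (b - T b)) \<ge> 0"
      by (rule monosetD[OF mM TM[of a] TM[of b]])
    moreover have "inner (T a - T b) ((a - T a) - (b - T b)) = inner (a - b) (T a - T b) - (norm (T a - T b))^2"
      by (simp add: power2_norm_eq_inner inner_diff_left inner_diff_right inner_commute)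
    ultimately show ?thesis by simp
  qed
  have fT: "firmly_nonexpansive T" unfolding firmly_nonexpansive_def using firm by blast
  have Bin: "(x (Suc n), x n - x (Suc n)) \<in> M" if "n \<ge> 1" for n
    using that M0M B_M0 by (auto simp: B_def)
  have Tx: "T (x n) = x (Suc n)" if "n \<ge> 1" for n using Bin[OF that] by (intro uniq) simp
  have T0: "T 0 = 0" using M0M B_M0[OF B00] by (intro uniq) auto
  have TC: "T z \<in> C" for z by (rule range_in_C[OF mM M0M TM])
  have fix0: "z = 0" if Tz: "T z = z" for z
  proof -
    have zM: "(z, 0) \<in> M" using TM[of z] Tz by simp
    have inc: "inner z (x k) \<le> inner z (x (Suc k))" if k1: "k \<ge> 1" for k
    proof -
      have "inner (z - x (Suc k)) (0 - (x k - x (Suc k))) \<ge> 0"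
        by (rule monosetD[OF mM zM Bin[OF k1]])
      moreover have "inner (x (Suc k)) (x k - x (Suc k)) = 0" by (rule base_zero[OF k1])
      ultimately show ?thesis by (simp add: inner_diff_left inner_diff_right inner_commute)
    qed
    define f where "f k = inner z (x (Suc k))" for k
    have "incseq f" unfolding f_def by (rule incseq_SucI) (use inc in auto)
    moreover have "f \<longlonglongrightarrow> 0"
      unfolding f_def using LIMSEQ_Suc[OF x_weak[of z]] by (simp add: inner_commute)
    ultimately have fle: "f k \<le> 0" for k by (rule incseq_le)
    have hz: "inner z (x n) \<le> 0" if n2: "n \<ge> 2" for n
    proof -
      have "Suc (n - 1) = n" using n2 by simp
      thus ?thesis using fle[of "n - 1"] by (simp add: f_def)
    qed
    have zC: "z \<in> C" using TC[of z] Tz by simp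
    have "inner z z \<le> 0" by (rule halfspace_C[OF hz zC])
    moreover have "inner z z \<ge> 0" by simp
    ultimately have "inner z z = 0" by linarith
    thus ?thesis by simp
  qed
  have Fix: "{z. T z = z} = {0}" using T0 fix0 by auto
  have "closure (range T) \<subseteq> C" using TC C_closed by (intro closure_minimal) auto
  moreover have "C \<subseteq> closure (range T)"
  proof -
    have "convex hull {x n | n. n \<ge> 2} \<subseteq> closure (range T)"
    proof
      fix c assume chull: "c \<in> convex hull {x n | n. n \<ge> 2}"
      hence cC: "c \<in> C" unfolding C_def using closure_subset by blast
      have c1: "norm c \<le> 1" using C_bound[OF cC] .
      show "c \<in> closure (range T)"
        unfolding closure_approachable
      proof (intro allI impI)
        fix \<epsilon> :: real assume e0: "\<epsilon> > 0"
        define lam where "lam = min (1/2) (\<epsilon>^2 / 20)"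
        have l0: "lam > 0" using e0 by (simp add: lam_def)
        have l1: "lam \<le> 1/2" by (simp add: lam_def)
        define S where "S z = z - lam *\<^sub>R (lam *\<^sub>R z + (1 - lam) *\<^sub>R T z - c)" for z
        have Sdiff: "S a - S b = (1 - lam^2) *\<^sub>R (a - b) - (lam * (1 - lam)) *\<^sub>R (T a - T b)" for a b
          unfolding S_def by (rule Sdiff_gen)
        have lip: "\<forall>a b. dist (S a) (S b) \<le> (1 - lam^2) * dist a b"
        proof (intro allI)
          fix a b
          show "dist (S a) (S b) \<le> (1 - lam^2) * dist a b"
            unfolding dist_norm Sdiff
            by (rule contraction_bound[OF l0 l1]) (use firm[of a b] in \<open>simp add: inner_commute\<close>)
        qed
        have c0: "0 \<le> 1 - lam^2" using power_le_one[of lam 2] l0 l1 by simp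
        have c1': "1 - lam^2 < 1" using l0 by simp
        obtain z where Sz: "S z = z" using banach_fix_type[OF c0 c1' lip] by blast
        have eqc: "lam *\<^sub>R z + (1 - lam) *\<^sub>R T z = c"
        proof -
          have "lam *\<^sub>R (lam *\<^sub>R z + (1 - lam) *\<^sub>R T z - c) = 0" using Sz by (simp add: S_def)
          thus ?thesis using l0 by simp
        qed
        define y where "y = T z"
        have zy: "lam *\<^sub>R (z - y) = c - y" using eqc by (simp add: y_def algebra_simps)
        define b0 where "b0 = inner (c - y) y + 2 * lam * (norm y + 1)"
        have hs: "inner (c - y) (x m) \<le> b0" if m2: "m \<ge> 2" for m
        proof -
          obtain n where n: "m = Suc n" "n \<ge> 1" using m2 by (cases m) auto
          have f1: "(norm (y - x (Suc n)))^2 \<le> inner (z - x n) (y - x (Suc n))"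
            using firm[of z "x n"] Tx[OF n(2)] by (simp add: y_def)
          have "inner ((z - y) - (x n - x (Suc n))) (y - x (Suc n))
              = inner (z - x n) (y - x (Suc n)) - (norm (y - x (Suc n)))^2"
            by (simp add: power2_norm_eq_inner inner_diff_left inner_diff_right inner_commute)
          hence i1: "inner ((z - y) - (x n - x (Suc n))) (y - x (Suc n)) \<ge> 0" using f1 by linarith
          have "inner (c - y) (y - x (Suc n)) = lam * inner (z - y) (y - x (Suc n))"
            using zy[symmetric] by simp
          also have "\<dots> \<ge> lam * inner (x n - x (Suc n)) (y - x (Suc n))"
            using i1 l0 by (intro mult_left_mono) (auto simp: inner_diff_left)
          finally have i2: "inner (c - y) (y - x (Suc n)) \<ge> lam * inner (x n - x (Suc n)) (y - x (Suc n))" .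
          have "\<bar>inner (x n - x (Suc n)) (y - x (Suc n))\<bar> \<le> norm (x n - x (Suc n)) * norm (y - x (Suc n))"
            by (rule Cauchy_Schwarz_ineq2)
          also have "\<dots> \<le> 2 * (norm y + 1)"
          proof (rule mult_mono)
            show "norm (x n - x (Suc n)) \<le> 2"
              using norm_triangle_ineq4[of "x n" "x (Suc n)"] x_norm_le1[of n] x_norm_le1[of "Suc n"] n by simp
            show "norm (y - x (Suc n)) \<le> norm y + 1"
              using norm_triangle_ineq4[of y "x (Suc n)"] x_norm_le1[of "Suc n"] n by simp
          qed auto
          finally have "- (2 * (norm y + 1)) \<le> inner (x n - x (Suc n)) (y - x (Suc n))"
            by (simp add: abs_le_iff)
          hence "lam * (- (2 * (norm y + 1))) \<le> lam * inner (x n - x (Suc n)) (y - x (Suc n))"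
            using l0 by (intro mult_left_mono) auto
          hence "lam * inner (x n - x (Suc n)) (y - x (Suc n)) \<ge> - (lam * (2 * (norm y + 1)))"
            by (simp only: mult_minus_right)
          moreover have "lam * (2 * (norm y + 1)) = 2 * lam * (norm y + 1)" by simp
          ultimately have "inner (c - y) (y - x (Suc n)) \<ge> - (2 * lam * (norm y + 1))" using i2 by linarith
          thus ?thesis by (simp add: b0_def n(1) inner_diff_right)
        qed
        have "inner (c - y) c \<le> b0" by (rule halfspace_C[OF hs cC])
        hence esq: "(norm (c - y))^2 \<le> 2 * lam * (norm y + 1)"
          by (simp add: b0_def power2_norm_eq_inner inner_diff_right inner_diff_left inner_commute)
        define e where "e = norm (c - y)"
        have e0': "e \<ge> 0" by (simp add: e_def)
        have ny: "norm y \<le> 1 + e" using norm_triangle_ineq4[of c "c - y"] c1 by (simp add: e_def)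
        have "e^2 \<le> 2 * lam * (2 + e)"
        proof -
          have "2 * lam * (norm y + 1) \<le> 2 * lam * (2 + e)" using ny l0 by (intro mult_left_mono) auto
          thus ?thesis using esq by (simp add: e_def)
        qed
        moreover have "lam * (2 * e) \<le> lam * (1 + e^2)"
        proof -
          have "0 \<le> (e - 1)^2" by simp
          hence "2 * e \<le> 1 + e^2" by (simp add: power2_eq_square algebra_simps)
          thus ?thesis using l0 by (intro mult_left_mono) auto
        qed
        moreover have "2 * lam * (2 + e) = 4 * lam + lam * (2 * e)" by (simp add: algebra_simps)
        moreover have "lam * (1 + e^2) = lam + lam * e^2" by (simp add: algebra_simps)
        moreover have "e^2 * (1 - lam) = e^2 - lam * e^2" by (simp add: algebra_simps)
        ultimately have "e^2 * (1 - lam) \<le> 5 * lam" by linarith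
        moreover have "e^2 * (1/2) \<le> e^2 * (1 - lam)" using l1 by (intro mult_left_mono) auto
        ultimately have "e^2 \<le> 10 * lam" by linarith
        also have "\<dots> \<le> \<epsilon>^2 / 2" by (simp add: lam_def)
        also have "\<dots> < \<epsilon>^2" using e0 by simp
        finally have "e < \<epsilon>" using e0 by (simp add: power_less_imp_less_base)
        thus "\<exists>y\<in>range T. dist y c < \<epsilon>"
          by (intro bexI[of _ y]) (auto simp: e_def y_def dist_norm norm_minus_commute)
      qed
    qed
    thus ?thesis unfolding C_def by (intro closure_minimal) auto
  qed
  ultimately have "closure (range T) = C" by blast
  thus ?thesis using fT Fix Tx by blast
qed

end


lemma sum_shift1: "(\<Sum>k = 1..<Suc n. f k) = (\<Sum>k<n. f (Suc k))"
  by (induct n) auto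

theorem theorem7p1:
  fixes u :: "real \<Rightarrow> 'a::{real_inner, complete_space}"
    and d t \<rho> :: "nat \<Rightarrow> real"
    and \<rho>inf :: real
    and x :: "nat \<Rightarrow> 'a"
  assumes infdim: "infinite_dimensional TYPE('a)"
    and u_inner: "\<And>s r. s \<ge> 0 \<Longrightarrow> r \<ge> 0 \<Longrightarrow> inner (u s) (u r) = exp (- (s - r)\<^sup>2)"
    and d_pos: "\<And>n. n \<ge> 1 \<Longrightarrow> d n > 0"
    and d_sq_summable: "summable (\<lambda>k. (d (Suc k))\<^sup>2)"
    and t_def: "\<And>n. t n = (\<Sum>k = 1..<n. d k)"
    and t_top: "filterlim t at_top sequentially"
    and d1: "d 1 \<le> 1/8"
    and d_dec: "\<And>n. n \<ge> 1 \<Longrightarrow> d (Suc n) \<le> d n / (1 + 64 * (d n)\<^sup>2)"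
    and rho1: "\<rho> 1 = 1"
    and rho_Suc: "\<And>n. n \<ge> 1 \<Longrightarrow> \<rho> (Suc n) = \<rho> n * exp (- (d n)\<^sup>2)"
    and rhoinf_def: "\<rho>inf = exp (- (\<Sum>k. (d (Suc k))\<^sup>2))"
    and x_def: "\<And>n. n \<ge> 1 \<Longrightarrow> x n = \<rho> n *\<^sub>R u (t n)"
  shows "\<exists>T :: 'a \<Rightarrow> 'a.
           firmly_nonexpansive T
         \<and> closure (range T) = closure (convex hull {x n | n. n \<ge> 2})
         \<and> {z. T z = z} = {0}
         \<and> (\<forall>n\<ge>1. T (x n) = x (Suc n))
         \<and> weakly_tendsto (\<lambda>n. (T ^^ n) (x 1)) 0
         \<and> (INF n\<in>{1..}. norm ((T ^^ n) (x 1))) = \<rho>inf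
         \<and> \<rho>inf > 0"
proof -
  interpret S: seq71 u d t \<rho> x
    apply unfold_locales
    apply (fact u_inner)
    apply (fact d_pos)
    apply (fact t_def)
    apply (fact t_top)
    apply (fact d1)
    apply (fact d_dec)
    apply (fact rho1)
    apply (fact rho_Suc)
    apply (fact x_def)
    done
  obtain T where fT: "firmly_nonexpansive T" and cT: "closure (range T) = S.C"
    and FT: "{z. T z = z} = {0}" and Tx: "\<forall>n\<ge>1. T (x n) = x (Suc n)"
    using S.main_T by blast
  have iter: "(T ^^ n) (x 1) = x (Suc n)" for n
    by (induction n) (use Tx in auto)
  have weak: "weakly_tendsto (\<lambda>n. (T ^^ n) (x 1)) 0"
    unfolding weakly_tendsto_def iter
  proof
    fix y
    show "(\<lambda>n. inner (x (Suc n)) y) \<longlonglongrightarrow> inner 0 y"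
      using LIMSEQ_Suc[OF S.x_weak[of y]] by simp
  qed
  define P where "P n = (\<Sum>k<n. (d (Suc k))\<^sup>2)" for n
  have nrm: "norm ((T ^^ n) (x 1)) = exp (- P n)" for n
  proof -
    have "norm ((T ^^ n) (x 1)) = \<rho> (Suc n)" unfolding iter using S.x_norm[of "Suc n"] by simp
    also have "\<dots> = exp (- P n)"
    proof -
      have r: "\<rho> (Suc n) = exp (- (\<Sum>k = 1..<Suc n. (d k)\<^sup>2))" by (rule S.rho_formula) simp
      have e: "(\<Sum>k = 1..<Suc n. (d k)\<^sup>2) = P n" unfolding P_def by (rule sum_shift1)
      show ?thesis by (simp only: r e)
    qed
    finally show ?thesis .
  qed
  have lim: "(\<lambda>n. exp (- P n)) \<longlonglongrightarrow> \<rho>inf"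
    unfolding rhoinf_def P_def
    by (intro tendsto_exp tendsto_minus summable_LIMSEQ[OF d_sq_summable])
  have lb: "\<rho>inf \<le> exp (- P n)" for n
  proof -
    have "P n \<le> (\<Sum>k. (d (Suc k))\<^sup>2)"
      unfolding P_def by (rule sum_le_suminf[OF d_sq_summable]) auto
    thus ?thesis unfolding rhoinf_def by simp
  qed
  have "(INF n\<in>{1..}. norm ((T ^^ n) (x 1))) = (INF n\<in>{1..}. exp (- P n))"
    unfolding nrm ..
  also have "\<dots> = \<rho>inf"
  proof (rule antisym)
    have bdd: "bdd_below ((\<lambda>n. exp (- P n)) ` {1..})"
      by (rule bdd_belowI[of _ \<rho>inf]) (use lb in auto)
    have "\<forall>n\<ge>1. (INF n\<in>{1..}. exp (- P n)) \<le> exp (- P n)"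
      using bdd by (auto intro: cINF_lower)
    hence "\<exists>N. \<forall>n\<ge>N. (INF n\<in>{1..}. exp (- P n)) \<le> exp (- P n)" by blast
    thus "(INF n\<in>{1..}. exp (- P n)) \<le> \<rho>inf"
      by (rule LIMSEQ_le_const[OF lim])
  next
    show "\<rho>inf \<le> (INF n\<in>{1..}. exp (- P n))"
      by (rule cINF_greatest) (use lb in auto)
  qed
  finally have INF: "(INF n\<in>{1..}. norm ((T ^^ n) (x 1))) = \<rho>inf" .
  have pos: "\<rho>inf > 0" by (simp add: rhoinf_def)
  show ?thesis
    using fT cT FT Tx weak INF pos by (intro exI[of _ T]) (simp add: S.C_def)
qed


end
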